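(* Let $(\omega,c)\in\mathbb{R}^2$ satisfy: $\omega>c^2/4$, or $\omega=c^2/4$ and $c>0$. Let $$\alpha_0=\tfrac13\bigl(4c+\sqrt{48\omega+4c^2}\bigr),\qquad A(x)=-3x^2+8cx+64\omega,\qquad L_0=L_0(\omega,c)=\frac{2\pi}{\sqrt{\alpha_0\sqrt{A(\alpha_0)}}}.$$ Assume $L_0<L<\infty$. Then there exists a positive single-bump solution $\Phi^L_{\omega,c}$ of $$-\Phi''+\Bigl(\omega-\frac{c^2}{4}\Bigr)\Phi+\frac c2|\Phi|^2\Phi-\frac3{16}|\Phi|^4\Phi=0,\qquad x\in\mathbb{T}_{2L},$$ such that $\Phi^L_{\omega,c}(x)\to\Phi_{\omega,c}(x)$ for every $x\in\mathbb{R}$ as $L\to\infty$. Moreover $\Phi^L_{\omega,c}$ is explicitly given by $$\bigl(\Phi^L_{\omega,c}(x)\bigr)^2=\eta_3\,\frac{\mathrm{dn}^2\!\left(\frac{x}{2g};k\right)}{1+\beta^2\,\mathrm{sn}^2\!\left(\frac{x}{2g};k\right)},\qquad x\in[-L,L],$$ for some parameters $\eta_3>0$, $g>0$, $k\in(0,1)$, $\beta\in\mathbb{R}$ depending on $(L,\omega,c)$.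
   Context: $\mathbb{T}_{2L}=\mathbb{R}/2L\mathbb{Z}\simeq[-L,L]$ is the torus of length $2L$. $\Phi_{\omega,c}$ is the positive even function on $\mathbb{R}$ given by $\Phi_{\omega,c}^2(x)=\dfrac{4\omega-c^2}{\sqrt{\omega}\bigl(\cosh(\sqrt{4\omega-c^2}\,x)-\frac{c}{2\sqrt\omega}\bigr)}$ if $\omega>c^2/4$, and $\Phi_{\omega,c}^2(x)=\dfrac{4c}{(cx)^2+1}$ if $\omega=c^2/4$, $c>0$ (the soliton profile on the whole line). A positive single-bump solution on $\mathbb{T}_{2L}$ means a positive $2L$-periodic solution which (up to translation) attains its maximum at $x=0$, is even, and is strictly decreasing on $(0,L)$, attaining its minimum at $x=L$ (one bump per period). $\mathrm{sn}(\cdot;k)$, $\mathrm{dn}(\cdot;k)$ are the Jacobi elliptic functions with modulus $k$: if $u=\int_0^\varphi(1-k^2\sin^2\theta)^{-1/2}d\theta$ then $\mathrm{sn}(u;k)=\sin\varphi$, $\mathrm{dn}(u;k)=\sqrt{1-k^2\mathrm{sn}^2(u;k)}$. The quantity $A(\alpha_0)$ is positive under the hypothesis on $(\omega,c)$. *)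

theory Defs
  imports "HOL-Analysis.Analysis"
begin

definition ellF :: "real \<Rightarrow> real \<Rightarrow> real" where
  "ellF phi k =
     (if 0 \<le> phi then integral {0..phi} (\<lambda>\<theta>. 1 / sqrt (1 - k\<^sup>2 * (sin \<theta>)\<^sup>2))
      else - integral {phi..0} (\<lambda>\<theta>. 1 / sqrt (1 - k\<^sup>2 * (sin \<theta>)\<^sup>2)))"

definition jacobi_am :: "real \<Rightarrow> real \<Rightarrow> real" where
  "jacobi_am u k = (THE phi. ellF phi k = u)"

definition jacobi_sn :: "real \<Rightarrow> real \<Rightarrow> real" where
  "jacobi_sn u k = sin (jacobi_am u k)"

definition jacobi_dn :: "real \<Rightarrow> real \<Rightarrow> real" where
  "jacobi_dn u k = sqrt (1 - k\<^sup>2 * (jacobi_sn u k)\<^sup>2)"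

definition soliton :: "real \<Rightarrow> real \<Rightarrow> real \<Rightarrow> real" where
  "soliton \<omega> c x =
     (if \<omega> > c\<^sup>2 / 4 then
        sqrt ((4 * \<omega> - c\<^sup>2) /
              (sqrt \<omega> * (cosh (sqrt (4 * \<omega> - c\<^sup>2) * x) - c / (2 * sqrt \<omega>))))
      else sqrt (4 * c / ((c * x)\<^sup>2 + 1)))"

definition alpha0 :: "real \<Rightarrow> real \<Rightarrow> real" where
  "alpha0 \<omega> c = (4 * c + sqrt (48 * \<omega> + 4 * c\<^sup>2)) / 3"

definition Apoly :: "real \<Rightarrow> real \<Rightarrow> real \<Rightarrow> real" where
  "Apoly \<omega> c x = - 3 * x\<^sup>2 + 8 * c * x + 64 * \<omega>"

definition L0 :: "real \<Rightarrow> real \<Rightarrow> real" where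
  "L0 \<omega> c = 2 * pi / sqrt (alpha0 \<omega> c * sqrt (Apoly \<omega> c (alpha0 \<omega> c)))"

definition solves_ode :: "real \<Rightarrow> real \<Rightarrow> (real \<Rightarrow> real) \<Rightarrow> bool" where
  "solves_ode \<omega> c \<Phi> \<longleftrightarrow>
     (\<exists>\<Phi>1 \<Phi>2. \<forall>x. (\<Phi> has_real_derivative \<Phi>1 x) (at x) \<and>
                    (\<Phi>1 has_real_derivative \<Phi>2 x) (at x) \<and>
                    - \<Phi>2 x + (\<omega> - c\<^sup>2 / 4) * \<Phi> x + c / 2 * \<bar>\<Phi> x\<bar>^2 * \<Phi> x
                      - 3 / 16 * \<bar>\<Phi> x\<bar>^4 * \<Phi> x = 0)"

text \<open>Positive single-bump solution on the torus T_{2L} (normalised so that the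
  maximum is at 0): positive, 2L-periodic, even, maximum at 0, strictly decreasing
  on [0,L], minimum at L.\<close>
definition single_bump_solution :: "real \<Rightarrow> real \<Rightarrow> real \<Rightarrow> (real \<Rightarrow> real) \<Rightarrow> bool" where
  "single_bump_solution \<omega> c L \<Phi> \<longleftrightarrow>
     solves_ode \<omega> c \<Phi> \<and>
     (\<forall>x. 0 < \<Phi> x) \<and>
     (\<forall>x. \<Phi> (x + 2 * L) = \<Phi> x) \<and>
     (\<forall>x. \<Phi> (- x) = \<Phi> x) \<and>
     (\<forall>x. \<Phi> x \<le> \<Phi> 0 \<and> \<Phi> L \<le> \<Phi> x) \<and>
     (\<forall>x y. 0 \<le> x \<and> x < y \<and> y \<le> L \<longrightarrow> \<Phi> y < \<Phi> x)"

end

theory Submission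
  imports Defs
begin

definition ellf :: "real \<Rightarrow> real \<Rightarrow> real" where
  "ellf k \<theta> = 1 / sqrt (1 - k\<^sup>2 * (sin \<theta>)\<^sup>2)"

definition orint :: "(real \<Rightarrow> real) \<Rightarrow> real \<Rightarrow> real" where
  "orint f \<phi> = (if 0 \<le> \<phi> then integral {0..\<phi>} f else - integral {\<phi>..0} f)"

lemma ellF_orint: "ellF \<phi> k = orint (ellf k) \<phi>"
  unfolding ellF_def orint_def ellf_def by simp

lemma orint_eq:
  fixes f :: "real \<Rightarrow> real"
  assumes "continuous_on {-M..M} f" "\<bar>\<phi>\<bar> \<le> M"
  shows "orint f \<phi> = integral {-M..\<phi>} f - integral {-M..0} f"
proof (cases "0 \<le> \<phi>")
  case True
  have int: "f integrable_on {-M..\<phi>}"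
    by (rule integrable_continuous_real, rule continuous_on_subset[OF assms(1)]) (use assms in auto)
  have "-M \<le> 0" using assms by auto
  from Henstock_Kurzweil_Integration.integral_combine[OF this True int]
  have "integral {-M..0} f + integral {0..\<phi>} f = integral {-M..\<phi>} f" .
  then show ?thesis using True unfolding orint_def by simp
next
  case False
  have int: "f integrable_on {-M..0}"
    by (rule integrable_continuous_real, rule continuous_on_subset[OF assms(1)]) (use assms in auto)
  have "-M \<le> \<phi>" "\<phi> \<le> 0" using assms False by auto
  from Henstock_Kurzweil_Integration.integral_combine[OF this int]
  have "integral {-M..\<phi>} f + integral {\<phi>..0} f = integral {-M..0} f" .
  then show ?thesis using False unfolding orint_def by simp
qed

lemma orint_deriv:
  fixes f :: "real \<Rightarrow> real"
  assumes "continuous_on {-M..M} f" "\<bar>\<phi>\<bar> < M"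
  shows "(orint f has_real_derivative f \<phi>) (at \<phi>)"
proof -
  have "((\<lambda>x. integral {-M..x} f) has_real_derivative f \<phi>) (at \<phi> within {-M..M})"
    using assms by (intro integral_has_real_derivative) auto
  then have "((\<lambda>x. integral {-M..x} f) has_real_derivative f \<phi>) (at \<phi> within {-M<..<M})"
    by (rule has_field_derivative_subset) auto
  then have "((\<lambda>x. integral {-M..x} f) has_real_derivative f \<phi>) (at \<phi>)"
    using assms by (subst (asm) at_within_open) auto
  then have d: "((\<lambda>x. integral {-M..x} f - integral {-M..0} f) has_real_derivative f \<phi>) (at \<phi>)"
    by (auto intro!: derivative_eq_intros)
  show ?thesis
    by (rule has_field_derivative_transform_within_open[OF d, of "{-M<..<M}"])
       (use assms in \<open>auto intro!: orint_eq[symmetric]\<close>)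
qed

lemma sin_sq_lt1: "\<bar>\<theta>\<bar> < pi/2 \<Longrightarrow> (sin \<theta>)\<^sup>2 < 1"
proof -
  assume a: "\<bar>\<theta>\<bar> < pi/2"
  have "cos \<theta> > 0" using a by (intro cos_gt_zero_pi) auto
  then show ?thesis using sin_cos_squared_add[of \<theta>] by (smt (verit) zero_less_power)
qed

lemma sin_sq_le1: "(sin (\<theta>::real))\<^sup>2 \<le> 1"
  using sin_cos_squared_add[of \<theta>] by (smt (verit) zero_le_power2)

lemma ksin_lt1:
  assumes "k\<^sup>2 < 1 \<or> (k\<^sup>2 \<le> 1 \<and> \<bar>\<theta>\<bar> < pi/2)"
  shows "k\<^sup>2 * (sin \<theta>)\<^sup>2 < 1"
proof -
  have s: "(sin \<theta>)\<^sup>2 \<le> 1" "0 \<le> (sin \<theta>)\<^sup>2" by (auto simp: sin_sq_le1)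
  show ?thesis
  proof (cases "k\<^sup>2 < 1")
    case True
    then show ?thesis using s mult_right_le_one_le[of "k\<^sup>2" "(sin \<theta>)\<^sup>2"]
      by (smt (verit) mult_left_le_one_le zero_le_power2)
  next
    case False
    then have "k\<^sup>2 \<le> 1" "(sin \<theta>)\<^sup>2 < 1" using assms sin_sq_lt1 by auto
    then show ?thesis using s by (smt (verit) mult_left_le_one_le zero_le_power2)
  qed
qed

lemma ellf_cont:
  assumes "\<forall>\<theta>\<in>S. k\<^sup>2 * (sin \<theta>)\<^sup>2 < 1"
  shows "continuous_on S (ellf k)"
  unfolding ellf_def using assms
  by (intro continuous_intros) auto

lemma ellf_pos: "k\<^sup>2 * (sin \<theta>)\<^sup>2 < 1 \<Longrightarrow> ellf k \<theta> > 0"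
  unfolding ellf_def by simp

lemma ellf_ge1: "k\<^sup>2 * (sin \<theta>)\<^sup>2 < 1 \<Longrightarrow> ellf k \<theta> \<ge> 1"
  unfolding ellf_def by (simp add: real_sqrt_le_1_iff)

lemma ellf_even: "ellf k (-\<theta>) = ellf k \<theta>"
  unfolding ellf_def by simp

lemma ellf_per: "ellf k (\<theta> + pi) = ellf k \<theta>"
  unfolding ellf_def by simp

lemma ellF_deriv:
  assumes "k\<^sup>2 < 1 \<or> (k\<^sup>2 \<le> 1 \<and> \<bar>\<phi>\<bar> < pi/2)"
  shows "((\<lambda>\<phi>. ellF \<phi> k) has_real_derivative ellf k \<phi>) (at \<phi>)"
proof (cases "k\<^sup>2 < 1")
  case True
  have "continuous_on {-(\<bar>\<phi>\<bar>+1)..\<bar>\<phi>\<bar>+1} (ellf k)"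
    using True by (intro ellf_cont) (auto intro: ksin_lt1)
  from orint_deriv[OF this] show ?thesis unfolding ellF_orint[abs_def] by auto
next
  case False
  then have a: "k\<^sup>2 \<le> 1" "\<bar>\<phi>\<bar> < pi/2" using assms by auto
  define M where "M = \<bar>\<phi>\<bar>/2 + pi/4"
  have "\<bar>\<theta>\<bar> < pi/2" if "\<theta> \<in> {-M..M}" for \<theta>
    using that a unfolding M_def atLeastAtMost_iff by linarith
  then have "continuous_on {-M..M} (ellf k)"
    using a by (intro ellf_cont) (auto intro!: ksin_lt1)
  from orint_deriv[OF this] show ?thesis unfolding ellF_orint[abs_def] M_def using a by auto
qed

lemma ellF_0[simp]: "ellF 0 k = 0"
  unfolding ellF_def by simp

context
  fixes k :: real
  assumes k2: "k\<^sup>2 < 1"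
begin

lemma ellF_d: "((\<lambda>\<phi>. ellF \<phi> k) has_real_derivative ellf k \<phi>) (at \<phi>)"
  using ellF_deriv k2 by auto

lemma ellF_isCont: "isCont (\<lambda>\<phi>. ellF \<phi> k) \<phi>"
  using ellF_d DERIV_isCont by blast

lemma ellF_strict: "a < b \<Longrightarrow> ellF a k < ellF b k"
  by (rule DERIV_pos_imp_increasing[where f="\<lambda>\<phi>. ellF \<phi> k"])
     (use ellF_d ellf_pos ksin_lt1 k2 in blast)+

lemma ellF_le_iff: "ellF a k \<le> ellF b k \<longleftrightarrow> a \<le> b"
  using ellF_strict[of a b] ellF_strict[of b a] by (cases a b rule: linorder_cases) auto

lemma ellF_less_iff: "ellF a k < ellF b k \<longleftrightarrow> a < b"
  using ellF_strict[of a b] ellF_strict[of b a] by (cases a b rule: linorder_cases) auto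

lemma ellF_inj: "ellF a k = ellF b k \<longleftrightarrow> a = b"
  using ellF_strict[of a b] ellF_strict[of b a] by (cases a b rule: linorder_cases) auto

lemma ellF_ge: "0 \<le> \<phi> \<Longrightarrow> \<phi> \<le> ellF \<phi> k"
proof -
  assume "0 \<le> \<phi>"
  have "(\<lambda>x. ellF x k - x) 0 \<le> (\<lambda>x. ellF x k - x) \<phi>"
  proof (rule DERIV_nonneg_imp_nondecreasing[OF \<open>0 \<le> \<phi>\<close>])
    fix x show "\<exists>y. ((\<lambda>x. ellF x k - x) has_real_derivative y) (at x) \<and> 0 \<le> y"
      using ellF_d[of x] ellf_ge1[OF ksin_lt1[of k x]] k2
      by (intro exI[of _ "ellf k x - 1"]) (auto intro!: derivative_eq_intros)
  qed
  then show ?thesis by simp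
qed

lemma ellF_le: "\<phi> \<le> 0 \<Longrightarrow> ellF \<phi> k \<le> \<phi>"
proof -
  assume "\<phi> \<le> 0"
  have "(\<lambda>x. ellF x k - x) \<phi> \<le> (\<lambda>x. ellF x k - x) 0"
  proof (rule DERIV_nonneg_imp_nondecreasing[OF \<open>\<phi> \<le> 0\<close>])
    fix x show "\<exists>y. ((\<lambda>x. ellF x k - x) has_real_derivative y) (at x) \<and> 0 \<le> y"
      using ellF_d[of x] ellf_ge1[OF ksin_lt1[of k x]] k2
      by (intro exI[of _ "ellf k x - 1"]) (auto intro!: derivative_eq_intros)
  qed
  then show ?thesis by simp
qed

lemma ellF_odd: "ellF (-\<phi>) k = - ellF \<phi> k"
proof -
  have "\<forall>x. ((\<lambda>x. ellF (-x) k + ellF x k) has_real_derivative 0) (at x)"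
  proof (intro allI)
    fix x
    have "((\<lambda>x. ellF (-x) k) has_real_derivative (ellf k (-x) * (-1))) (at x)"
      by (rule DERIV_chain2[OF ellF_d]) (auto intro!: derivative_eq_intros)
    then have "((\<lambda>x. ellF (-x) k + ellF x k) has_real_derivative (ellf k (-x) * (-1) + ellf k x)) (at x)"
      by (intro DERIV_add ellF_d)
    then show "((\<lambda>x. ellF (-x) k + ellF x k) has_real_derivative 0) (at x)"
      by (simp add: ellf_even)
  qed
  from DERIV_isconst_all[OF this, of \<phi> 0] show ?thesis by simp
qed

lemma ellF_per: "ellF (\<phi> + pi) k = ellF \<phi> k + ellF pi k"
proof -
  have "\<forall>x. ((\<lambda>x. ellF (x + pi) k - ellF x k) has_real_derivative 0) (at x)"
  proof (intro allI)
    fix x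
    have "((\<lambda>x. ellF (x + pi) k) has_real_derivative (ellf k (x + pi) * 1)) (at x)"
      by (rule DERIV_chain2[OF ellF_d]) (auto intro!: derivative_eq_intros)
    then have "((\<lambda>x. ellF (x + pi) k - ellF x k) has_real_derivative (ellf k (x + pi) * 1 - ellf k x)) (at x)"
      by (intro DERIV_diff ellF_d)
    then show "((\<lambda>x. ellF (x + pi) k - ellF x k) has_real_derivative 0) (at x)"
      by (simp add: ellf_per)
  qed
  from DERIV_isconst_all[OF this, of \<phi> 0] show ?thesis by simp
qed

lemma ellF_pi: "ellF pi k = 2 * ellF (pi/2) k"
  using ellF_per[of "-pi/2"] ellF_odd[of "pi/2"] by simp

lemma ellF_surj: "\<exists>\<phi>. ellF \<phi> k = u"
proof (cases "0 \<le> u")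
  case True
  have "\<exists>x. 0 \<le> x \<and> x \<le> u \<and> ellF x k = u"
    using True ellF_ge[OF True] ellF_isCont by (intro IVT) auto
  then show ?thesis by blast
next
  case False
  have "\<exists>x. u \<le> x \<and> x \<le> 0 \<and> ellF x k = u"
    using False ellF_le[of u] ellF_isCont by (intro IVT) auto
  then show ?thesis by blast
qed

lemma am_ellF: "ellF (jacobi_am u k) k = u"
  unfolding jacobi_am_def
  by (rule theI') (use ellF_surj ellF_inj in metis)

lemma ellF_am: "jacobi_am (ellF \<phi> k) k = \<phi>"
  unfolding jacobi_am_def
  by (rule the_equality) (use ellF_inj in auto)

lemma am_strict: "a < b \<Longrightarrow> jacobi_am a k < jacobi_am b k"
  by (metis am_ellF ellF_less_iff)

lemma am_le_iff: "jacobi_am a k \<le> jacobi_am b k \<longleftrightarrow> a \<le> b"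
  by (metis am_ellF ellF_le_iff)

lemma am_0[simp]: "jacobi_am 0 k = 0"
  using ellF_am[of 0] by simp

lemma am_odd: "jacobi_am (-u) k = - jacobi_am u k"
  by (metis am_ellF ellF_am ellF_odd)

lemma am_per: "jacobi_am (u + 2 * ellF (pi/2) k) k = jacobi_am u k + pi"
  by (metis am_ellF ellF_am ellF_per ellF_pi)

lemma am_isCont: "isCont (\<lambda>u. jacobi_am u k) u"
proof -
  have "isCont (\<lambda>u. jacobi_am u k) (ellF (jacobi_am u k) k)"
    by (rule isCont_inverse_function[where d=1 and f="\<lambda>\<phi>. ellF \<phi> k"])
       (auto simp: ellF_am ellF_isCont)
  then show ?thesis by (simp add: am_ellF)
qed

lemma am_deriv: "((\<lambda>u. jacobi_am u k) has_real_derivative sqrt (1 - k\<^sup>2 * (sin (jacobi_am u k))\<^sup>2)) (at u)"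
proof -
  have pos: "1 - k\<^sup>2 * (sin (jacobi_am u k))\<^sup>2 > 0" using ksin_lt1 k2 by auto
  have "((\<lambda>u. jacobi_am u k) has_real_derivative inverse (ellf k (jacobi_am u k))) (at u)"
    by (rule DERIV_inverse_function[where f="\<lambda>\<phi>. ellF \<phi> k" and a="u-1" and b="u+1"])
       (use ellF_d ellf_pos ksin_lt1 k2 am_ellF am_isCont in \<open>auto simp: less_imp_neq[symmetric]\<close>)
  moreover have "inverse (ellf k (jacobi_am u k)) = sqrt (1 - k\<^sup>2 * (sin (jacobi_am u k))\<^sup>2)"
    unfolding ellf_def using pos by (simp add: inverse_eq_divide)
  ultimately show ?thesis by simp
qed

end


definition wfn :: "real \<Rightarrow> real \<Rightarrow> real" where
  "wfn k \<theta> = sqrt (1 - k\<^sup>2 * (sin \<theta>)\<^sup>2)"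
definition rf :: "real \<Rightarrow> real \<Rightarrow> real" where
  "rf \<beta> \<theta> = 1 / sqrt (1 + \<beta>\<^sup>2 * (sin \<theta>)\<^sup>2)"

lemma D_pos: "1 + \<beta>\<^sup>2 * (sin \<theta>)\<^sup>2 > (0::real)"
  by (smt (verit) zero_le_power2 mult_nonneg_nonneg)

lemma rf_pos: "rf \<beta> \<theta> > 0"
  unfolding rf_def using D_pos by simp

lemma rf_sq: "(rf \<beta> \<theta>)\<^sup>2 * (1 + \<beta>\<^sup>2 * (sin \<theta>)\<^sup>2) = 1"
  unfolding rf_def using D_pos[of \<beta> \<theta>] by (simp add: power_divide)

lemma rf_deriv: "(rf \<beta> has_real_derivative (- \<beta>\<^sup>2 * sin \<theta> * cos \<theta> * (rf \<beta> \<theta>)^3)) (at \<theta>)"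
proof -
  have D: "1 + \<beta>\<^sup>2 * (sin \<theta>)\<^sup>2 > 0" by (rule D_pos)
  have "(rf \<beta> has_real_derivative
     (- (inverse (sqrt (1 + \<beta>\<^sup>2 * (sin \<theta>)\<^sup>2)) / 2 * (\<beta>\<^sup>2 * (2 * sin \<theta> * cos \<theta>)))
        / (sqrt (1 + \<beta>\<^sup>2 * (sin \<theta>)\<^sup>2))\<^sup>2)) (at \<theta>)"
    unfolding rf_def[abs_def] using D
    by (auto intro!: derivative_eq_intros simp: power2_eq_square)
  moreover have "(- (inverse (sqrt (1 + \<beta>\<^sup>2 * (sin \<theta>)\<^sup>2)) / 2 * (\<beta>\<^sup>2 * (2 * sin \<theta> * cos \<theta>)))
        / (sqrt (1 + \<beta>\<^sup>2 * (sin \<theta>)\<^sup>2))\<^sup>2) = - \<beta>\<^sup>2 * sin \<theta> * cos \<theta> * (rf \<beta> \<theta>)^3"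
    unfolding rf_def using D by (simp add: field_simps power3_eq_cube power2_eq_square)
  ultimately show ?thesis by simp
qed

lemma wfn_pos: "k\<^sup>2 < 1 \<Longrightarrow> wfn k \<theta> > 0"
  unfolding wfn_def using ksin_lt1[of k \<theta>] by simp

lemma wfn_sq: "k\<^sup>2 < 1 \<Longrightarrow> (wfn k \<theta>)\<^sup>2 = 1 - k\<^sup>2 * (sin \<theta>)\<^sup>2"
  unfolding wfn_def using ksin_lt1[of k \<theta>] by simp

lemma wfn_deriv: assumes "k\<^sup>2 < 1"
  shows "(wfn k has_real_derivative (- k\<^sup>2 * sin \<theta> * cos \<theta> / wfn k \<theta>)) (at \<theta>)"
proof -
  have P: "1 - k\<^sup>2 * (sin \<theta>)\<^sup>2 > 0" using ksin_lt1[of k \<theta>] assms by simp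
  have "(wfn k has_real_derivative
     (inverse (sqrt (1 - k\<^sup>2 * (sin \<theta>)\<^sup>2)) / 2 * (- (k\<^sup>2 * (2 * sin \<theta> * cos \<theta>))))) (at \<theta>)"
    unfolding wfn_def[abs_def] using P
    by (auto intro!: derivative_eq_intros simp: power2_eq_square)
  then show ?thesis unfolding wfn_def using P by (simp add: field_simps)
qed

definition Fp :: "real \<Rightarrow> real \<Rightarrow> real \<Rightarrow> real \<Rightarrow> real" where
  "Fp \<eta> k \<beta> \<theta> = sqrt \<eta> * wfn k \<theta> * rf \<beta> \<theta>"
definition Hp :: "real \<Rightarrow> real \<Rightarrow> real \<Rightarrow> real \<Rightarrow> real" where
  "Hp \<eta> k \<beta> \<theta> = - sqrt \<eta> * (k\<^sup>2 + \<beta>\<^sup>2) * sin \<theta> * cos \<theta> * (rf \<beta> \<theta>)^3"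
definition Hd :: "real \<Rightarrow> real \<Rightarrow> real \<Rightarrow> real \<Rightarrow> real" where
  "Hd \<eta> k \<beta> \<theta> = - sqrt \<eta> * (k\<^sup>2 + \<beta>\<^sup>2) * (rf \<beta> \<theta>)^3 *
     ((cos \<theta>)\<^sup>2 - (sin \<theta>)\<^sup>2 - 3 * \<beta>\<^sup>2 * (sin \<theta>)\<^sup>2 * (cos \<theta>)\<^sup>2 * (rf \<beta> \<theta>)\<^sup>2)"

lemma Fp_deriv: assumes "k\<^sup>2 < 1"
  shows "(Fp \<eta> k \<beta> has_real_derivative Hp \<eta> k \<beta> \<theta> / wfn k \<theta>) (at \<theta>)"
proof -
  have "(Fp \<eta> k \<beta> has_real_derivative
     sqrt \<eta> * ((- k\<^sup>2 * sin \<theta> * cos \<theta> / wfn k \<theta>) * rf \<beta> \<theta> + wfn k \<theta> * (- \<beta>\<^sup>2 * sin \<theta> * cos \<theta> * (rf \<beta> \<theta>)^3))) (at \<theta>)"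
    unfolding Fp_def[abs_def]
    by (auto intro!: derivative_eq_intros wfn_deriv[OF assms] rf_deriv simp: algebra_simps)
  moreover have "sqrt \<eta> * ((- k\<^sup>2 * sin \<theta> * cos \<theta> / wfn k \<theta>) * rf \<beta> \<theta> + wfn k \<theta> * (- \<beta>\<^sup>2 * sin \<theta> * cos \<theta> * (rf \<beta> \<theta>)^3))
      = Hp \<eta> k \<beta> \<theta> / wfn k \<theta>"
  proof -
    have w: "wfn k \<theta> > 0" "(wfn k \<theta>)\<^sup>2 = 1 - k\<^sup>2 * (sin \<theta>)\<^sup>2" using wfn_pos wfn_sq assms by auto
    have r: "(rf \<beta> \<theta>)\<^sup>2 * (1 + \<beta>\<^sup>2 * (sin \<theta>)\<^sup>2) = 1" by (rule rf_sq)
    have eq: "k\<^sup>2 * rf \<beta> \<theta> + (wfn k \<theta>)\<^sup>2 * \<beta>\<^sup>2 * (rf \<beta> \<theta>)^3 = (k\<^sup>2 + \<beta>\<^sup>2) * (rf \<beta> \<theta>)^3"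
      unfolding w(2) using r by algebra
    have "sqrt \<eta> * ((- k\<^sup>2 * sin \<theta> * cos \<theta> / wfn k \<theta>) * rf \<beta> \<theta> + wfn k \<theta> * (- \<beta>\<^sup>2 * sin \<theta> * cos \<theta> * (rf \<beta> \<theta>)^3))
       = - sqrt \<eta> * sin \<theta> * cos \<theta> * (k\<^sup>2 * rf \<beta> \<theta> + (wfn k \<theta>)\<^sup>2 * \<beta>\<^sup>2 * (rf \<beta> \<theta>)^3) / wfn k \<theta>"
      using w(1) by (simp add: field_simps power2_eq_square power3_eq_cube)
    also have "\<dots> = Hp \<eta> k \<beta> \<theta> / wfn k \<theta>" unfolding eq Hp_def by simp
    finally show ?thesis .
  qed
  ultimately show ?thesis by simp
qed

lemma Hp_deriv: "(Hp \<eta> k \<beta> has_real_derivative Hd \<eta> k \<beta> \<theta>) (at \<theta>)"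
proof -
  have "(Hp \<eta> k \<beta> has_real_derivative
     - sqrt \<eta> * (k\<^sup>2 + \<beta>\<^sup>2) * ((cos \<theta> * cos \<theta> - sin \<theta> * sin \<theta>) * (rf \<beta> \<theta>)^3
        + sin \<theta> * cos \<theta> * (3 * (rf \<beta> \<theta>)\<^sup>2 * (- \<beta>\<^sup>2 * sin \<theta> * cos \<theta> * (rf \<beta> \<theta>)^3)))) (at \<theta>)"
    unfolding Hp_def[abs_def]
    by (auto intro!: derivative_eq_intros rf_deriv simp: algebra_simps power2_eq_square power3_eq_cube)
  then show ?thesis unfolding Hd_def
    by (simp add: algebra_simps power2_eq_square power3_eq_cube)
qed

lemma ode_alg:
  fixes \<eta> k \<beta> g a cc \<theta> :: real
  assumes k2: "k\<^sup>2 < 1" and eta: "\<eta> > 0" and g: "g > 0"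
    and E0: "(k\<^sup>2 + \<beta>\<^sup>2) + 4*g\<^sup>2*(a + cc*\<eta>/2 - 3*\<eta>\<^sup>2/16) = 0"
    and E1: "-2*(k\<^sup>2+\<beta>\<^sup>2)*(1+\<beta>\<^sup>2) + 4*g\<^sup>2*(2*a*\<beta>\<^sup>2 + cc/2*\<eta>*(\<beta>\<^sup>2-k\<^sup>2) + 3/8*\<eta>\<^sup>2*k\<^sup>2) = 0"
    and E2: "(k\<^sup>2+\<beta>\<^sup>2)*\<beta>\<^sup>2 + 4*g\<^sup>2*(a*\<beta>^4 - cc/2*\<eta>*k\<^sup>2*\<beta>\<^sup>2 - 3/16*\<eta>\<^sup>2*k^4) = 0"
  shows "- (Hd \<eta> k \<beta> \<theta> * wfn k \<theta> / (4*g\<^sup>2)) + a * Fp \<eta> k \<beta> \<theta>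
          + cc/2 * \<bar>Fp \<eta> k \<beta> \<theta>\<bar>^2 * Fp \<eta> k \<beta> \<theta> - 3/16 * \<bar>Fp \<eta> k \<beta> \<theta>\<bar>^4 * Fp \<eta> k \<beta> \<theta> = 0"
proof -
  define s where "s = sin \<theta>"
  define co where "co = cos \<theta>"
  define r where "r = rf \<beta> \<theta>"
  define w where "w = wfn k \<theta>"
  define q where "q = sqrt \<eta>"
  define S where "S = s\<^sup>2"
  define D where "D = 1 + \<beta>\<^sup>2 * S"
  define K where "K = k\<^sup>2 + \<beta>\<^sup>2"
  have rD: "r\<^sup>2 * D = 1" unfolding r_def D_def S_def s_def by (rule rf_sq)
  have w2: "w\<^sup>2 = 1 - k\<^sup>2 * S" unfolding w_def S_def s_def using wfn_sq k2 by auto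
  have co2: "co\<^sup>2 = 1 - S" unfolding co_def S_def s_def by (simp add: cos_squared_eq)
  have q2: "q\<^sup>2 = \<eta>" unfolding q_def using eta by simp
  have F: "Fp \<eta> k \<beta> \<theta> = q * w * r" unfolding Fp_def q_def w_def r_def by simp
  have Hd: "Hd \<eta> k \<beta> \<theta> = - q * K * r^3 * (co\<^sup>2 - S - 3 * \<beta>\<^sup>2 * S * co\<^sup>2 * r\<^sup>2)"
    unfolding Hd_def q_def K_def r_def co_def S_def s_def by simp
  have T1: "Hd \<eta> k \<beta> \<theta> * w = - q * w * r^5 * K * ((1 - 2*S)*D - 3*\<beta>\<^sup>2*S*(1-S))"
    unfolding Hd using rD co2 by algebra
  have T2: "q * w * r = q * w * r^5 * D\<^sup>2"
    using rD by algebra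
  have T3: "(q * w * r)^3 = q * w * r^5 * (\<eta> * (1 - k\<^sup>2*S) * D)"
    using rD w2 q2 by algebra
  have T4: "(q * w * r)^5 = q * w * r^5 * (\<eta>\<^sup>2 * (1 - k\<^sup>2*S)\<^sup>2)"
    using rD w2 q2 by algebra
  have Z: "K * ((1 - 2*S)*D - 3*\<beta>\<^sup>2*S*(1-S)) + 4*g\<^sup>2 * (a * D\<^sup>2 + cc/2 * (\<eta> * (1 - k\<^sup>2*S) * D) - 3/16 * (\<eta>\<^sup>2 * (1 - k\<^sup>2*S)\<^sup>2)) = 0"
  proof -
    have "K * ((1 - 2*S)*D - 3*\<beta>\<^sup>2*S*(1-S)) + 4*g\<^sup>2 * (a * D\<^sup>2 + cc/2 * (\<eta> * (1 - k\<^sup>2*S) * D) - 3/16 * (\<eta>\<^sup>2 * (1 - k\<^sup>2*S)\<^sup>2))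
      = ((k\<^sup>2 + \<beta>\<^sup>2) + 4*g\<^sup>2*(a + cc*\<eta>/2 - 3*\<eta>\<^sup>2/16))
        + S * (-2*(k\<^sup>2+\<beta>\<^sup>2)*(1+\<beta>\<^sup>2) + 4*g\<^sup>2*(2*a*\<beta>\<^sup>2 + cc/2*\<eta>*(\<beta>\<^sup>2-k\<^sup>2) + 3/8*\<eta>\<^sup>2*k\<^sup>2))
        + S\<^sup>2 * ((k\<^sup>2+\<beta>\<^sup>2)*\<beta>\<^sup>2 + 4*g\<^sup>2*(a*\<beta>^4 - cc/2*\<eta>*k\<^sup>2*\<beta>\<^sup>2 - 3/16*\<eta>\<^sup>2*k^4))"
      unfolding K_def D_def by (simp add: field_simps power2_eq_square power4_eq_xxxx)
    then show ?thesis using E0 E1 E2 by simp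
  qed
  have "- (Hd \<eta> k \<beta> \<theta> * w / (4*g\<^sup>2)) + a * (q*w*r) + cc/2 * (q*w*r)^3 - 3/16 * (q*w*r)^5
     = q * w * r^5 / (4*g\<^sup>2) * (K * ((1 - 2*S)*D - 3*\<beta>\<^sup>2*S*(1-S)) + 4*g\<^sup>2 * (a * D\<^sup>2 + cc/2 * (\<eta> * (1 - k\<^sup>2*S) * D) - 3/16 * (\<eta>\<^sup>2 * (1 - k\<^sup>2*S)\<^sup>2)))"
    apply (subst T1) apply (subst T2) apply (subst T3) apply (subst T4)
    using g by (simp add: field_simps)
  also have "\<dots> = 0" using Z by simp
  finally show ?thesis unfolding F w_def[symmetric]
    by (simp add: power2_abs power_abs power3_eq_cube power2_eq_square power4_eq_xxxx eval_nat_numeral abs_mult_self_eq)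
qed

definition prof :: "real \<Rightarrow> real \<Rightarrow> real \<Rightarrow> real \<Rightarrow> real \<Rightarrow> real" where
  "prof \<eta> k \<beta> g x = Fp \<eta> k \<beta> (jacobi_am (x / (2*g)) k)"

definition Gs :: "real \<Rightarrow> real \<Rightarrow> real \<Rightarrow> real \<Rightarrow> real" where
  "Gs \<eta> k \<beta> S = sqrt \<eta> * sqrt ((1 - k\<^sup>2 * S) / (1 + \<beta>\<^sup>2 * S))"

lemma Fp_Gs: "Fp \<eta> k \<beta> \<theta> = Gs \<eta> k \<beta> ((sin \<theta>)\<^sup>2)"
  unfolding Fp_def Gs_def wfn_def rf_def by (simp add: real_sqrt_divide)

lemma Gs_pos: "k\<^sup>2 < 1 \<Longrightarrow> \<eta> > 0 \<Longrightarrow> 0 \<le> S \<Longrightarrow> S \<le> 1 \<Longrightarrow> Gs \<eta> k \<beta> S > 0"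
proof -
  assume a: "k\<^sup>2 < 1" "\<eta> > 0" "0 \<le> S" "S \<le> 1"
  have "k\<^sup>2 * S \<le> k\<^sup>2" using a mult_left_le[of S "k\<^sup>2"] by simp
  then have "1 - k\<^sup>2 * S > 0" using a by simp
  moreover have "1 + \<beta>\<^sup>2 * S > 0" using a by (simp add: add_pos_nonneg)
  ultimately show ?thesis unfolding Gs_def using a by simp
qed

lemma Gs_strict:
  assumes "k\<^sup>2 < 1" "\<eta> > 0" "k \<noteq> 0" "0 \<le> S1" "S1 < S2" "S2 \<le> 1"
  shows "Gs \<eta> k \<beta> S2 < Gs \<eta> k \<beta> S1"
proof -
  have D1: "1 + \<beta>\<^sup>2 * S1 > 0" "1 + \<beta>\<^sup>2 * S2 > 0" using assms
    by (simp_all add: add_pos_nonneg)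
  have K: "k\<^sup>2 + \<beta>\<^sup>2 > 0" using assms by (simp add: add_pos_nonneg)
  have "(1 - k\<^sup>2 * S2) * (1 + \<beta>\<^sup>2 * S1) < (1 - k\<^sup>2 * S1) * (1 + \<beta>\<^sup>2 * S2)"
  proof -
    have "(1 - k\<^sup>2 * S1) * (1 + \<beta>\<^sup>2 * S2) - (1 - k\<^sup>2 * S2) * (1 + \<beta>\<^sup>2 * S1) = (k\<^sup>2 + \<beta>\<^sup>2) * (S2 - S1)"
      by (simp add: algebra_simps)
    moreover have "(k\<^sup>2 + \<beta>\<^sup>2) * (S2 - S1) > 0" using K assms by simp
    ultimately show ?thesis by linarith
  qed
  then have "(1 - k\<^sup>2 * S2) / (1 + \<beta>\<^sup>2 * S2) < (1 - k\<^sup>2 * S1) / (1 + \<beta>\<^sup>2 * S1)"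
  proof -
    have "(1 - k\<^sup>2 * S2) * (1 + \<beta>\<^sup>2 * S1) / ((1 + \<beta>\<^sup>2 * S1) * (1 + \<beta>\<^sup>2 * S2))
        < (1 - k\<^sup>2 * S1) * (1 + \<beta>\<^sup>2 * S2) / ((1 + \<beta>\<^sup>2 * S1) * (1 + \<beta>\<^sup>2 * S2))"
      using D1 \<open>(1 - k\<^sup>2 * S2) * (1 + \<beta>\<^sup>2 * S1) < _\<close> by (intro divide_strict_right_mono) auto
    then show ?thesis using D1 by simp
  qed
  then show ?thesis unfolding Gs_def using assms by simp
qed

lemma Gs_mono:
  assumes "k\<^sup>2 < 1" "\<eta> > 0" "k \<noteq> 0" "0 \<le> S1" "S1 \<le> S2" "S2 \<le> 1"
  shows "Gs \<eta> k \<beta> S2 \<le> Gs \<eta> k \<beta> S1"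
proof (cases "S1 = S2")
  case False
  then show ?thesis using Gs_strict[OF assms(1-4) _ assms(6), where \<beta>=\<beta>] assms(5) by simp
qed simp

lemma Fp_per: "Fp \<eta> k \<beta> (\<theta> + pi) = Fp \<eta> k \<beta> \<theta>"
  unfolding Fp_Gs by simp

lemma Fp_even: "Fp \<eta> k \<beta> (- \<theta>) = Fp \<eta> k \<beta> \<theta>"
  unfolding Fp_Gs by simp

lemma prof_solves:
  fixes \<omega> c \<eta> k \<beta> g :: real
  assumes k2: "k\<^sup>2 < 1" and eta: "\<eta> > 0" and g: "g > 0"
    and E0: "(k\<^sup>2 + \<beta>\<^sup>2) + 4*g\<^sup>2*((\<omega> - c\<^sup>2/4) + c*\<eta>/2 - 3*\<eta>\<^sup>2/16) = 0"
    and E1: "-2*(k\<^sup>2+\<beta>\<^sup>2)*(1+\<beta>\<^sup>2) + 4*g\<^sup>2*(2*(\<omega> - c\<^sup>2/4)*\<beta>\<^sup>2 + c/2*\<eta>*(\<beta>\<^sup>2-k\<^sup>2) + 3/8*\<eta>\<^sup>2*k\<^sup>2) = 0"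
    and E2: "(k\<^sup>2+\<beta>\<^sup>2)*\<beta>\<^sup>2 + 4*g\<^sup>2*((\<omega> - c\<^sup>2/4)*\<beta>^4 - c/2*\<eta>*k\<^sup>2*\<beta>\<^sup>2 - 3/16*\<eta>\<^sup>2*k^4) = 0"
  shows "solves_ode \<omega> c (prof \<eta> k \<beta> g)"
proof -
  define \<phi> where "\<phi> x = jacobi_am (x / (2*g)) k" for x
  have dphi: "(\<phi> has_real_derivative wfn k (\<phi> x) * (1 / (2*g))) (at x)" for x
    unfolding \<phi>_def[abs_def]
    by (rule DERIV_chain2[OF am_deriv[OF k2, unfolded wfn_def[symmetric]]]) (use g in \<open>auto intro!: derivative_eq_intros\<close>)
  have w: "wfn k (\<phi> x) > 0" for x using wfn_pos k2 by auto
  define P1 where "P1 x = Hp \<eta> k \<beta> (\<phi> x) / (2*g)" for x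
  define P2 where "P2 x = Hd \<eta> k \<beta> (\<phi> x) * wfn k (\<phi> x) / (4*g\<^sup>2)" for x
  have d1: "(prof \<eta> k \<beta> g has_real_derivative P1 x) (at x)" for x
  proof -
    have "((\<lambda>x. Fp \<eta> k \<beta> (\<phi> x)) has_real_derivative Hp \<eta> k \<beta> (\<phi> x) / wfn k (\<phi> x) * (wfn k (\<phi> x) * (1 / (2*g)))) (at x)"
      by (rule DERIV_chain2[OF Fp_deriv[OF k2] dphi])
    moreover have "Hp \<eta> k \<beta> (\<phi> x) / wfn k (\<phi> x) * (wfn k (\<phi> x) * (1 / (2*g))) = P1 x"
      unfolding P1_def using w[of x] by simp
    ultimately show ?thesis unfolding prof_def[abs_def] \<phi>_def[symmetric] by simp
  qed
  have d2: "(P1 has_real_derivative P2 x) (at x)" for x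
  proof -
    have "((\<lambda>x. Hp \<eta> k \<beta> (\<phi> x)) has_real_derivative Hd \<eta> k \<beta> (\<phi> x) * (wfn k (\<phi> x) * (1 / (2*g)))) (at x)"
      by (rule DERIV_chain2[OF Hp_deriv dphi])
    then have "((\<lambda>x. Hp \<eta> k \<beta> (\<phi> x) / (2*g)) has_real_derivative Hd \<eta> k \<beta> (\<phi> x) * (wfn k (\<phi> x) * (1 / (2*g))) / (2*g)) (at x)"
      by (rule DERIV_cdivide)
    moreover have "Hd \<eta> k \<beta> (\<phi> x) * (wfn k (\<phi> x) * (1 / (2*g))) / (2*g) = P2 x"
      unfolding P2_def using g by (simp add: power2_eq_square field_simps)
    ultimately show ?thesis unfolding P1_def[abs_def] by simp
  qed
  have ode: "- P2 x + (\<omega> - c\<^sup>2 / 4) * prof \<eta> k \<beta> g x + c / 2 * \<bar>prof \<eta> k \<beta> g x\<bar>^2 * prof \<eta> k \<beta> g x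
                      - 3 / 16 * \<bar>prof \<eta> k \<beta> g x\<bar>^4 * prof \<eta> k \<beta> g x = 0" for x
    using ode_alg[OF k2 eta g E0 E1 E2, of "\<phi> x"] unfolding P2_def prof_def \<phi>_def by simp
  show ?thesis unfolding solves_ode_def using d1 d2 ode by blast
qed

lemma prof_bump:
  fixes \<omega> c \<eta> k \<beta> g L :: real
  assumes k2: "k\<^sup>2 < 1" and k0: "k \<noteq> 0" and eta: "\<eta> > 0" and g: "g > 0"
    and E0: "(k\<^sup>2 + \<beta>\<^sup>2) + 4*g\<^sup>2*((\<omega> - c\<^sup>2/4) + c*\<eta>/2 - 3*\<eta>\<^sup>2/16) = 0"
    and E1: "-2*(k\<^sup>2+\<beta>\<^sup>2)*(1+\<beta>\<^sup>2) + 4*g\<^sup>2*(2*(\<omega> - c\<^sup>2/4)*\<beta>\<^sup>2 + c/2*\<eta>*(\<beta>\<^sup>2-k\<^sup>2) + 3/8*\<eta>\<^sup>2*k\<^sup>2) = 0"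
    and E2: "(k\<^sup>2+\<beta>\<^sup>2)*\<beta>\<^sup>2 + 4*g\<^sup>2*((\<omega> - c\<^sup>2/4)*\<beta>^4 - c/2*\<eta>*k\<^sup>2*\<beta>\<^sup>2 - 3/16*\<eta>\<^sup>2*k^4) = 0"
    and L: "L = 2 * g * ellF (pi/2) k"
  shows "single_bump_solution \<omega> c L (prof \<eta> k \<beta> g)"
proof -
  let ?P = "prof \<eta> k \<beta> g"
  have S01a: "0 \<le> (sin t)\<^sup>2" for t :: real by simp
  have S01b: "(sin t)\<^sup>2 \<le> 1" for t :: real by (rule sin_sq_le1)
  note S01 = S01a S01b
  have pos: "\<forall>x. 0 < ?P x"
    unfolding prof_def Fp_Gs using Gs_pos[OF k2 eta] S01 by auto
  have per: "\<forall>x. ?P (x + 2 * L) = ?P x"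
  proof
    fix x
    have "(x + 2 * L) / (2 * g) = x / (2*g) + 2 * ellF (pi/2) k" using g unfolding L by (simp add: field_simps)
    then show "?P (x + 2 * L) = ?P x" unfolding prof_def using am_per[OF k2] Fp_per by simp
  qed
  have even: "\<forall>x. ?P (- x) = ?P x"
    unfolding prof_def using am_odd[OF k2] Fp_even by (simp add: minus_divide_left[symmetric])
  have amK: "jacobi_am (ellF (pi/2) k) k = pi/2" using ellF_am[OF k2] by simp
  have Kpos: "ellF (pi/2) k > 0" using ellF_strict[OF k2, of 0 "pi/2"] by simp
  have keyS: "0 \<le> jacobi_am (x / (2*g)) k \<and> jacobi_am (x / (2*g)) k \<le> pi/2" if "0 \<le> x" "x \<le> L" for x
  proof -
    have "0 \<le> x / (2*g)" "x / (2*g) \<le> ellF (pi/2) k" using that g unfolding L by (auto simp: field_simps)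
    then show ?thesis using am_le_iff[OF k2] amK am_0[OF k2] by metis
  qed
  have dec: "\<forall>x y. 0 \<le> x \<and> x < y \<and> y \<le> L \<longrightarrow> ?P y < ?P x"
  proof (intro allI impI)
    fix x y assume xy: "0 \<le> x \<and> x < y \<and> y \<le> L"
    let ?a = "jacobi_am (x / (2*g)) k" and ?b = "jacobi_am (y / (2*g)) k"
    have ab: "?a < ?b" using am_strict[OF k2] xy g by (simp add: divide_strict_right_mono)
    have ra: "0 \<le> ?a" "?b \<le> pi/2" using keyS xy by auto
    have "sin ?a < sin ?b" using ab ra by (intro sin_monotone_2pi) auto
    moreover have "0 \<le> sin ?a" using ra ab by (intro sin_ge_zero) auto
    ultimately have "(sin ?a)\<^sup>2 < (sin ?b)\<^sup>2" by (simp add: power_strict_mono)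
    then show "?P y < ?P x" unfolding prof_def Fp_Gs
      using Gs_strict[OF k2 eta k0] S01 by auto
  qed
  have P0: "?P 0 = Gs \<eta> k \<beta> 0" unfolding prof_def Fp_Gs using am_0[OF k2] by simp
  have PL: "?P L = Gs \<eta> k \<beta> 1" unfolding prof_def Fp_Gs
  proof -
    have h: "L / (2*g) = ellF (pi/2) k" using g unfolding L by simp
    show "Gs \<eta> k \<beta> ((sin (jacobi_am (L / (2 * g)) k))\<^sup>2) = Gs \<eta> k \<beta> 1"
      unfolding h amK by simp
  qed
  have bnd: "\<forall>x. ?P x \<le> ?P 0 \<and> ?P L \<le> ?P x"
    unfolding P0 PL unfolding prof_def Fp_Gs using Gs_mono[OF k2 eta k0] S01 by auto
  show ?thesis unfolding single_bump_solution_def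
    using prof_solves[OF k2 eta g E0 E1 E2] pos per even bnd dec by blast
qed

lemma prof_formula:
  assumes k2: "k\<^sup>2 < 1" and eta: "\<eta> > 0"
  shows "(prof \<eta> k \<beta> g x)\<^sup>2 = \<eta> * (jacobi_dn (x / (2 * g)) k)\<^sup>2
                       / (1 + \<beta>\<^sup>2 * (jacobi_sn (x / (2 * g)) k)\<^sup>2)"
proof -
  have "(wfn k (jacobi_am (x / (2 * g)) k))\<^sup>2 = (jacobi_dn (x / (2 * g)) k)\<^sup>2"
    unfolding jacobi_dn_def jacobi_sn_def wfn_def by simp
  moreover have "(rf \<beta> (jacobi_am (x / (2 * g)) k))\<^sup>2 = 1 / (1 + \<beta>\<^sup>2 * (jacobi_sn (x / (2 * g)) k)\<^sup>2)"
    unfolding rf_def jacobi_sn_def using D_pos by (simp add: power_divide)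
  ultimately show ?thesis unfolding prof_def Fp_def using eta
    by (simp add: power_mult_distrib)
qed


lemma alg_E0:
  fixes e1 p e3 :: real
  assumes d1: "e3 \<noteq> 0" and d2: "p - e1 \<noteq> 0"
  shows "((-e1)*(e3-p)/(e3*(p-e1)) + (e3-p)/(p-e1)) + 4*(4/(e3*(p-e1)))*(-(e1*p + e1*e3 + p*e3)/16 + (e1+p+e3)/4*e3/2 - 3*e3\<^sup>2/16) = 0"
proof -
  define d where "d = p - e1"
  have e1: "e1 = p - d" unfolding d_def by simp
  have "d \<noteq> 0" using d2 d_def by simp
  then show ?thesis using d1 unfolding e1 by (simp add: field_simps power2_eq_square)
qed

lemma alg_E1:
  fixes e1 p e3 :: real
  assumes d1: "e3 \<noteq> 0" and d2: "p - e1 \<noteq> 0"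
  shows "-2*((-e1)*(e3-p)/(e3*(p-e1)) + (e3-p)/(p-e1))*(1+(e3-p)/(p-e1)) + 4*(4/(e3*(p-e1)))*(2*(-(e1*p + e1*e3 + p*e3)/16)*((e3-p)/(p-e1)) + (e1+p+e3)/4/2*e3*((e3-p)/(p-e1)-(-e1)*(e3-p)/(e3*(p-e1))) + 3/8*e3\<^sup>2*((-e1)*(e3-p)/(e3*(p-e1)))) = 0"
proof -
  define d where "d = p - e1"
  have e1: "e1 = p - d" unfolding d_def by simp
  have "d \<noteq> 0" using d2 d_def by simp
  then show ?thesis using d1 unfolding e1 by (simp add: field_simps power2_eq_square)
qed

lemma alg_E2:
  fixes e1 p e3 :: real
  assumes d1: "e3 \<noteq> 0" and d2: "p - e1 \<noteq> 0"
  shows "((-e1)*(e3-p)/(e3*(p-e1)) + (e3-p)/(p-e1))*((e3-p)/(p-e1)) + 4*(4/(e3*(p-e1)))*((-(e1*p + e1*e3 + p*e3)/16)*((e3-p)/(p-e1))\<^sup>2 - (e1+p+e3)/4/2*e3*((-e1)*(e3-p)/(e3*(p-e1)))*((e3-p)/(p-e1)) - 3/16*e3\<^sup>2*((-e1)*(e3-p)/(e3*(p-e1)))\<^sup>2) = 0"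
proof -
  define d where "d = p - e1"
  have e1: "e1 = p - d" unfolding d_def by simp
  have "d \<noteq> 0" using d2 d_def by simp
  then show ?thesis using d1 unfolding e1 by (simp add: field_simps power2_eq_square)
qed

lemma E_inst:
  fixes e1 p e3 k \<beta> g a cc :: real
  assumes d1: "e3 \<noteq> 0" and d2: "p - e1 \<noteq> 0"
    and hk: "k\<^sup>2 = (-e1)*(e3-p)/(e3*(p-e1))" and hb: "\<beta>\<^sup>2 = (e3-p)/(p-e1)" and hg: "g\<^sup>2 = 4/(e3*(p-e1))"
    and ha: "a = -(e1*p + e1*e3 + p*e3)/16" and hc: "cc = (e1+p+e3)/4"
  shows "(k\<^sup>2 + \<beta>\<^sup>2) + 4*g\<^sup>2*(a + cc*e3/2 - 3*e3\<^sup>2/16) = 0"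
    and "-2*(k\<^sup>2+\<beta>\<^sup>2)*(1+\<beta>\<^sup>2) + 4*g\<^sup>2*(2*a*\<beta>\<^sup>2 + cc/2*e3*(\<beta>\<^sup>2-k\<^sup>2) + 3/8*e3\<^sup>2*k\<^sup>2) = 0"
    and "(k\<^sup>2+\<beta>\<^sup>2)*\<beta>\<^sup>2 + 4*g\<^sup>2*(a*\<beta>^4 - cc/2*e3*k\<^sup>2*\<beta>\<^sup>2 - 3/16*e3\<^sup>2*k^4) = 0"
proof -
  have b4: "\<beta>^4 = (\<beta>\<^sup>2)\<^sup>2" and k4: "k^4 = (k\<^sup>2)\<^sup>2" by simp_all
  show "(k\<^sup>2 + \<beta>\<^sup>2) + 4*g\<^sup>2*(a + cc*e3/2 - 3*e3\<^sup>2/16) = 0"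
    unfolding hk hb hg ha hc by (rule alg_E0[OF d1 d2])
  show "-2*(k\<^sup>2+\<beta>\<^sup>2)*(1+\<beta>\<^sup>2) + 4*g\<^sup>2*(2*a*\<beta>\<^sup>2 + cc/2*e3*(\<beta>\<^sup>2-k\<^sup>2) + 3/8*e3\<^sup>2*k\<^sup>2) = 0"
    unfolding hk hb hg ha hc by (rule alg_E1[OF d1 d2])
  show "(k\<^sup>2+\<beta>\<^sup>2)*\<beta>\<^sup>2 + 4*g\<^sup>2*(a*\<beta>^4 - cc/2*e3*k\<^sup>2*\<beta>\<^sup>2 - 3/16*e3\<^sup>2*k^4) = 0"
    unfolding b4 k4 hk hb hg ha hc by (rule alg_E2[OF d1 d2])
qed

definition sA :: "real \<Rightarrow> real \<Rightarrow> real \<Rightarrow> real" where "sA \<omega> c p = sqrt (Apoly \<omega> c p)"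
definition e1 :: "real \<Rightarrow> real \<Rightarrow> real \<Rightarrow> real" where "e1 \<omega> c p = (4*c - p - sA \<omega> c p)/2"
definition e3 :: "real \<Rightarrow> real \<Rightarrow> real \<Rightarrow> real" where "e3 \<omega> c p = (4*c - p + sA \<omega> c p)/2"
definition k2f :: "real \<Rightarrow> real \<Rightarrow> real \<Rightarrow> real" where
  "k2f \<omega> c p = (- e1 \<omega> c p) * (e3 \<omega> c p - p) / (e3 \<omega> c p * (p - e1 \<omega> c p))"
definition kf :: "real \<Rightarrow> real \<Rightarrow> real \<Rightarrow> real" where "kf \<omega> c p = sqrt (k2f \<omega> c p)"
definition bf :: "real \<Rightarrow> real \<Rightarrow> real \<Rightarrow> real" where
  "bf \<omega> c p = sqrt ((e3 \<omega> c p - p) / (p - e1 \<omega> c p))"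
definition Pf :: "real \<Rightarrow> real \<Rightarrow> real \<Rightarrow> real" where "Pf \<omega> c p = e3 \<omega> c p * (p - e1 \<omega> c p)"
definition gf :: "real \<Rightarrow> real \<Rightarrow> real \<Rightarrow> real" where "gf \<omega> c p = 2 / sqrt (Pf \<omega> c p)"
definition KK :: "real \<Rightarrow> real" where "KK k = ellF (pi/2) k"
definition LL :: "real \<Rightarrow> real \<Rightarrow> real \<Rightarrow> real" where "LL \<omega> c p = 2 * gf \<omega> c p * KK (kf \<omega> c p)"

locale pc =
  fixes \<omega> c :: real
  assumes hyp: "\<omega> > c\<^sup>2 / 4 \<or> (\<omega> = c\<^sup>2 / 4 \<and> c > 0)"
begin

lemma om_pos: "\<omega> > 0"
proof (cases "\<omega> > c\<^sup>2 / 4")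
  case True
  have "c\<^sup>2 / 4 \<ge> 0" by simp
  then show ?thesis using True by linarith
next
  case False
  then have "\<omega> = c\<^sup>2/4" "c > 0" using hyp by auto
  moreover have "c\<^sup>2 > 0" using \<open>c > 0\<close> by simp
  ultimately show ?thesis by linarith
qed

lemma c_bounds: "c \<le> 2 * sqrt \<omega>" "- 2 * sqrt \<omega> < c"
proof -
  have "c\<^sup>2 \<le> 4 * \<omega>" using hyp by auto
  then have "sqrt (c\<^sup>2) \<le> sqrt (4 * \<omega>)" by (rule real_sqrt_le_mono)
  then have ab: "\<bar>c\<bar> \<le> 2 * sqrt \<omega>" by (simp add: real_sqrt_mult)
  then show "c \<le> 2 * sqrt \<omega>" by simp
  show "- 2 * sqrt \<omega> < c"
  proof (cases "\<omega> > c\<^sup>2 / 4")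
    case True
    then have "c\<^sup>2 < 4 * \<omega>" by simp
    then have "sqrt (c\<^sup>2) < sqrt (4 * \<omega>)" by (rule real_sqrt_less_mono)
    then have "\<bar>c\<bar> < 2 * sqrt \<omega>" by (simp add: real_sqrt_mult)
    then show ?thesis by simp
  next
    case False
    then have "c > 0" using hyp by auto
    moreover have "sqrt \<omega> > 0" using om_pos by simp
    ultimately show ?thesis by linarith
  qed
qed

lemma c_strict: "\<omega> > c\<^sup>2 / 4 \<Longrightarrow> c < 2 * sqrt \<omega>"
proof -
  assume "\<omega> > c\<^sup>2 / 4"
  then have "c\<^sup>2 < 4 * \<omega>" by simp
  then have "sqrt (c\<^sup>2) < sqrt (4 * \<omega>)" by (rule real_sqrt_less_mono)
  then have "\<bar>c\<bar> < 2 * sqrt \<omega>" by (simp add: real_sqrt_mult)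
  then show ?thesis by simp
qed

definition "Qv = sqrt (48 * \<omega> + 4 * c\<^sup>2)"

lemma Qv_sq: "Qv\<^sup>2 = 48 * \<omega> + 4 * c\<^sup>2"
  unfolding Qv_def using om_pos by (simp add: add_pos_nonneg)

lemma Qv_pos: "Qv > 0"
  unfolding Qv_def using om_pos by (simp add: add_pos_nonneg)

lemma alpha0_eq: "alpha0 \<omega> c = (4*c + Qv)/3"
  unfolding alpha0_def Qv_def by (simp add: algebra_simps)

lemma alpha0_pos: "alpha0 \<omega> c > 0"
proof (cases "c \<ge> 0")
  case True then show ?thesis unfolding alpha0_eq using Qv_pos by simp
next
  case False
  then have "\<omega> > c\<^sup>2/4" using hyp by auto
  then have "(4*c)\<^sup>2 < Qv\<^sup>2" unfolding Qv_sq by (auto simp: power2_eq_square)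
  then have "sqrt ((4*c)\<^sup>2) < sqrt (Qv\<^sup>2)" by (rule real_sqrt_less_mono)
  moreover have "sqrt ((4*c)\<^sup>2) = \<bar>4*c\<bar>" by (rule real_sqrt_abs)
  moreover have "sqrt (Qv\<^sup>2) = Qv" using Qv_pos by simp
  ultimately have "\<bar>4*c\<bar> < Qv" by simp
  then show ?thesis unfolding alpha0_eq by simp
qed

lemma A_minus_sq: "Apoly \<omega> c p - (3*p - 4*c)\<^sup>2 = -12 * (p - alpha0 \<omega> c) * (p - (4*c - Qv)/3)"
proof -
  have "Apoly \<omega> c p - (3*p - 4*c)\<^sup>2 = -12*p\<^sup>2 + 32*c*p + 64*\<omega> - 16*c\<^sup>2"
    unfolding Apoly_def by (simp add: algebra_simps power2_eq_square)
  also have "\<dots> = -12 * (p - (4*c + Qv)/3) * (p - (4*c - Qv)/3)"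
  proof -
    have "-12 * (p - (4*c + Qv)/3) * (p - (4*c - Qv)/3) = -12*p\<^sup>2 + 32*c*p - (64/3*c\<^sup>2 - 4/3*Qv\<^sup>2)"
      by (simp add: field_simps power2_eq_square)
    then show ?thesis unfolding Qv_sq by (simp add: field_simps)
  qed
  finally show ?thesis unfolding alpha0_eq .
qed

lemma alpha0'_nonpos: "(4*c - Qv)/3 \<le> 0"
proof -
  have "(4*c)\<^sup>2 \<le> Qv\<^sup>2" unfolding Qv_sq using hyp by (auto simp: power2_eq_square)
  then have "sqrt ((4*c)\<^sup>2) \<le> sqrt (Qv\<^sup>2)" by (rule real_sqrt_le_mono)
  moreover have "sqrt ((4*c)\<^sup>2) = \<bar>4*c\<bar>" by (rule real_sqrt_abs)
  moreover have "sqrt (Qv\<^sup>2) = Qv" using Qv_pos by simp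
  ultimately have "\<bar>4*c\<bar> \<le> Qv" by simp
  then show ?thesis by simp
qed

lemma A_ge: "0 < p \<Longrightarrow> p \<le> alpha0 \<omega> c \<Longrightarrow> (3*p - 4*c)\<^sup>2 \<le> Apoly \<omega> c p"
proof -
  assume p: "0 < p" "p \<le> alpha0 \<omega> c"
  have "-12 * (p - alpha0 \<omega> c) * (p - (4*c - Qv)/3) \<ge> 0"
    using p alpha0'_nonpos by (intro mult_nonneg_nonneg mult_nonpos_nonpos) auto
  then show ?thesis using A_minus_sq[of p] by simp
qed

lemma A_gt: "0 < p \<Longrightarrow> p < alpha0 \<omega> c \<Longrightarrow> (3*p - 4*c)\<^sup>2 < Apoly \<omega> c p"
proof -
  assume p: "0 < p" "p < alpha0 \<omega> c"
  have "(p - alpha0 \<omega> c) * (p - (4*c - Qv)/3) < 0"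
    using p alpha0'_nonpos by (intro mult_neg_pos) auto
  moreover have "Apoly \<omega> c p - (3*p - 4*c)\<^sup>2 = -12 * ((p - alpha0 \<omega> c) * (p - (4*c - Qv)/3))"
    using A_minus_sq[of p] by (simp only: mult.assoc)
  ultimately show ?thesis by linarith
qed

lemma A_alpha0: "Apoly \<omega> c (alpha0 \<omega> c) = Qv\<^sup>2"
proof -
  have "Apoly \<omega> c (alpha0 \<omega> c) = (3 * alpha0 \<omega> c - 4*c)\<^sup>2" using A_minus_sq[of "alpha0 \<omega> c"] by simp
  also have "3 * alpha0 \<omega> c - 4*c = Qv" unfolding alpha0_eq by (simp add: field_simps)
  finally show ?thesis .
qed

lemma sA_alpha0: "sA \<omega> c (alpha0 \<omega> c) = Qv"
  unfolding sA_def A_alpha0 using Qv_pos by simp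

lemma A_pos: "0 < p \<Longrightarrow> p \<le> alpha0 \<omega> c \<Longrightarrow> Apoly \<omega> c p > 0"
proof -
  assume p: "0 < p" "p \<le> alpha0 \<omega> c"
  show ?thesis
  proof (cases "p = alpha0 \<omega> c")
    case True then show ?thesis using A_alpha0 Qv_pos by simp
  next
    case False
    then have "(3*p - 4*c)\<^sup>2 < Apoly \<omega> c p" using A_gt[of p] p by simp
    moreover have "0 \<le> (3*p - 4*c)\<^sup>2" by simp
    ultimately show ?thesis by linarith
  qed
qed

lemma sA_sq: "0 < p \<Longrightarrow> p \<le> alpha0 \<omega> c \<Longrightarrow> (sA \<omega> c p)\<^sup>2 = Apoly \<omega> c p"
proof -
  assume p: "0 < p" "p \<le> alpha0 \<omega> c"
  then have "Apoly \<omega> c p > 0" by (rule A_pos)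
  then show ?thesis unfolding sA_def by simp
qed

lemma sA_gt3: "0 < p \<Longrightarrow> p < alpha0 \<omega> c \<Longrightarrow> 3*p - 4*c < sA \<omega> c p"
proof -
  assume p: "0 < p" "p < alpha0 \<omega> c"
  have "sqrt ((3*p - 4*c)\<^sup>2) < sA \<omega> c p" unfolding sA_def using A_gt[OF p] by (rule real_sqrt_less_mono)
  then have "\<bar>3*p - 4*c\<bar> < sA \<omega> c p" by (simp only: real_sqrt_abs)
  then show ?thesis by linarith
qed

lemma sA_ge3: "0 < p \<Longrightarrow> p \<le> alpha0 \<omega> c \<Longrightarrow> 3*p - 4*c \<le> sA \<omega> c p"
proof -
  assume p: "0 < p" "p \<le> alpha0 \<omega> c"
  have "sqrt ((3*p - 4*c)\<^sup>2) \<le> sA \<omega> c p" unfolding sA_def using A_ge[OF p] by (rule real_sqrt_le_mono)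
  then have "\<bar>3*p - 4*c\<bar> \<le> sA \<omega> c p" by (simp only: real_sqrt_abs)
  then show ?thesis by linarith
qed

lemma alpha0_lt: "alpha0 \<omega> c < 2*c + 4 * sqrt \<omega>"
proof -
  have s: "sqrt \<omega> > 0" "(sqrt \<omega>)\<^sup>2 = \<omega>" using om_pos by auto
  have pos: "2*c + 12 * sqrt \<omega> > 0" using c_bounds s by linarith
  have "Qv\<^sup>2 < (2*c + 12 * sqrt \<omega>)\<^sup>2"
  proof -
    have "(2*c + 12 * sqrt \<omega>)\<^sup>2 - Qv\<^sup>2 = 48 * sqrt \<omega> * (c + 2 * sqrt \<omega>)"
      unfolding Qv_sq using s(2) by (simp add: algebra_simps power2_eq_square)
    moreover have "48 * sqrt \<omega> * (c + 2 * sqrt \<omega>) > 0" using s c_bounds by simp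
    ultimately show ?thesis by linarith
  qed
  then have "Qv < 2*c + 12 * sqrt \<omega>" using less_imp_le[OF pos] by (rule power_less_imp_less_base)
  then show ?thesis unfolding alpha0_eq by simp
qed

lemma e1_neg: "0 < p \<Longrightarrow> p \<le> alpha0 \<omega> c \<Longrightarrow> e1 \<omega> c p < 0"
proof -
  assume p: "0 < p" "p \<le> alpha0 \<omega> c"
  have s: "sqrt \<omega> > 0" "(sqrt \<omega>)\<^sup>2 = \<omega>" using om_pos by auto
  have "(p - 2*c)\<^sup>2 < (4 * sqrt \<omega>)\<^sup>2"
  proof -
    have "\<bar>p - 2*c\<bar> < 4 * sqrt \<omega>" using p alpha0_lt c_bounds by (auto simp: abs_less_iff)
    then have "\<bar>p - 2*c\<bar>\<^sup>2 < (4 * sqrt \<omega>)\<^sup>2" by (intro power_strict_mono) auto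
    then show ?thesis by simp
  qed
  moreover have "(4 * sqrt \<omega>)\<^sup>2 = 16 * \<omega>" using s(2) by (simp add: power_mult_distrib)
  moreover have "Apoly \<omega> c p - (4*c - p)\<^sup>2 = 64 * \<omega> - 4 * (p - 2*c)\<^sup>2"
    unfolding Apoly_def by (simp add: power2_eq_square algebra_simps)
  ultimately have "(4*c - p)\<^sup>2 < Apoly \<omega> c p" by linarith
  then have "sqrt ((4*c - p)\<^sup>2) < sA \<omega> c p" unfolding sA_def by (rule real_sqrt_less_mono)
  then have "\<bar>4*c - p\<bar> < sA \<omega> c p" by (simp only: real_sqrt_abs)
  then have "4*c - p - sA \<omega> c p < 0" by linarith
  then show ?thesis unfolding e1_def by simp
qed

lemma e3_ge: "0 < p \<Longrightarrow> p \<le> alpha0 \<omega> c \<Longrightarrow> p \<le> e3 \<omega> c p"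
  using sA_ge3 unfolding e3_def by fastforce

lemma e3_gt: "0 < p \<Longrightarrow> p < alpha0 \<omega> c \<Longrightarrow> p < e3 \<omega> c p"
  using sA_gt3 unfolding e3_def by fastforce

lemma e3_alpha0: "e3 \<omega> c (alpha0 \<omega> c) = alpha0 \<omega> c"
proof -
  have "e3 \<omega> c (alpha0 \<omega> c) = (4*c - alpha0 \<omega> c + Qv)/2" unfolding e3_def sA_alpha0 by simp
  also have "\<dots> = alpha0 \<omega> c" by (simp add: alpha0_eq field_simps)
  finally show ?thesis .
qed

lemma e1_alpha0: "alpha0 \<omega> c - e1 \<omega> c (alpha0 \<omega> c) = Qv"
proof -
  have "e1 \<omega> c (alpha0 \<omega> c) = (4*c - alpha0 \<omega> c - Qv)/2" unfolding e1_def sA_alpha0 by simp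
  then show ?thesis by (simp add: alpha0_eq field_simps)
qed

lemma ee: "0 < p \<Longrightarrow> p \<le> alpha0 \<omega> c \<Longrightarrow> e3 \<omega> c p > 0 \<and> p - e1 \<omega> c p > 0 \<and> - e1 \<omega> c p > 0 \<and> e3 \<omega> c p - p \<ge> 0"
  using e1_neg e3_ge by fastforce

lemma Pf_pos: "0 < p \<Longrightarrow> p \<le> alpha0 \<omega> c \<Longrightarrow> Pf \<omega> c p > 0"
  unfolding Pf_def using ee by simp

lemma k2f_pos: "0 < p \<Longrightarrow> p < alpha0 \<omega> c \<Longrightarrow> k2f \<omega> c p > 0"
proof -
  assume p: "0 < p" "p < alpha0 \<omega> c"
  then have "e3 \<omega> c p - p > 0" using e3_gt by simp
  moreover note E = ee[OF p(1) less_imp_le[OF p(2)]]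
  ultimately have "(- e1 \<omega> c p) * (e3 \<omega> c p - p) > 0" "e3 \<omega> c p * (p - e1 \<omega> c p) > 0"
    by (intro mult_pos_pos; linarith)+
  then show ?thesis unfolding k2f_def by (rule divide_pos_pos)
qed

lemma k2f_nonneg: "0 < p \<Longrightarrow> p \<le> alpha0 \<omega> c \<Longrightarrow> k2f \<omega> c p \<ge> 0"
proof -
  assume p: "0 < p" "p \<le> alpha0 \<omega> c"
  note E = ee[OF p]
  have "(- e1 \<omega> c p) * (e3 \<omega> c p - p) \<ge> 0" using E by (intro mult_nonneg_nonneg; linarith)
  moreover have "e3 \<omega> c p * (p - e1 \<omega> c p) > 0" using E by (intro mult_pos_pos; linarith)
  ultimately show ?thesis unfolding k2f_def by (rule divide_nonneg_pos)
qed

lemma k2f_lt1: "0 < p \<Longrightarrow> p \<le> alpha0 \<omega> c \<Longrightarrow> k2f \<omega> c p < 1"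
proof -
  assume p: "0 < p" "p \<le> alpha0 \<omega> c"
  have n: "e1 \<omega> c p < 0" "p \<le> e3 \<omega> c p" using e1_neg[OF p] e3_ge[OF p] by auto
  have d: "e3 \<omega> c p * (p - e1 \<omega> c p) > 0" using n p by simp
  have "e3 \<omega> c p * (p - e1 \<omega> c p) - (- e1 \<omega> c p) * (e3 \<omega> c p - p) = p * (e3 \<omega> c p - e1 \<omega> c p)"
    by (simp add: algebra_simps)
  moreover have "p * (e3 \<omega> c p - e1 \<omega> c p) > 0" using n p by simp
  ultimately have X: "(- e1 \<omega> c p) * (e3 \<omega> c p - p) < e3 \<omega> c p * (p - e1 \<omega> c p)" by linarith
  show ?thesis unfolding k2f_def by (subst divide_less_eq_1_pos[OF d]) (rule X)
qed

lemma k2f_alpha0: "k2f \<omega> c (alpha0 \<omega> c) = 0"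
  unfolding k2f_def e3_alpha0 by simp

lemma kf_sq: "0 < p \<Longrightarrow> p \<le> alpha0 \<omega> c \<Longrightarrow> (kf \<omega> c p)\<^sup>2 = k2f \<omega> c p"
  unfolding kf_def using k2f_nonneg by simp

lemma kf_bounds: "0 < p \<Longrightarrow> p \<le> alpha0 \<omega> c \<Longrightarrow> 0 \<le> kf \<omega> c p \<and> kf \<omega> c p < 1"
proof -
  assume p: "0 < p" "p \<le> alpha0 \<omega> c"
  have "k2f \<omega> c p < 1" "k2f \<omega> c p \<ge> 0" using k2f_lt1[OF p] k2f_nonneg[OF p] by auto
  then show ?thesis unfolding kf_def by simp
qed

lemma bf_sq: "0 < p \<Longrightarrow> p \<le> alpha0 \<omega> c \<Longrightarrow> (bf \<omega> c p)\<^sup>2 = (e3 \<omega> c p - p) / (p - e1 \<omega> c p)"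
proof -
  assume p: "0 < p" "p \<le> alpha0 \<omega> c"
  note E = ee[OF p]
  have "(e3 \<omega> c p - p) / (p - e1 \<omega> c p) \<ge> 0" using E by (intro divide_nonneg_pos) auto
  then show ?thesis unfolding bf_def by simp
qed

lemma gf_sq: "0 < p \<Longrightarrow> p \<le> alpha0 \<omega> c \<Longrightarrow> (gf \<omega> c p)\<^sup>2 = 4 / (e3 \<omega> c p * (p - e1 \<omega> c p))"
proof -
  assume p: "0 < p" "p \<le> alpha0 \<omega> c"
  have "Pf \<omega> c p > 0" using Pf_pos[OF p] .
  then show ?thesis unfolding gf_def by (simp add: power_divide Pf_def)
qed

lemma gf_pos: "0 < p \<Longrightarrow> p \<le> alpha0 \<omega> c \<Longrightarrow> gf \<omega> c p > 0"
  unfolding gf_def using Pf_pos by simp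

lemma c_rel: "c = (e1 \<omega> c p + p + e3 \<omega> c p)/4"
  unfolding e1_def e3_def by (simp add: field_simps)

lemma a_rel: "0 < p \<Longrightarrow> p \<le> alpha0 \<omega> c \<Longrightarrow>
   \<omega> - c\<^sup>2/4 = -(e1 \<omega> c p * p + e1 \<omega> c p * e3 \<omega> c p + p * e3 \<omega> c p)/16"
proof -
  assume p: "0 < p" "p \<le> alpha0 \<omega> c"
  have S: "(sA \<omega> c p)\<^sup>2 = -3*p\<^sup>2 + 8*c*p + 64*\<omega>" using sA_sq[OF p] unfolding Apoly_def by simp
  have "-(e1 \<omega> c p * p + e1 \<omega> c p * e3 \<omega> c p + p * e3 \<omega> c p)/16
      = -(p * (4*c - p) + ((4*c - p)\<^sup>2 - (sA \<omega> c p)\<^sup>2)/4)/16"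
    unfolding e1_def e3_def by (simp add: field_simps power2_eq_square)
  also have "\<dots> = \<omega> - c\<^sup>2/4" unfolding S by (simp add: field_simps power2_eq_square)
  finally show ?thesis by simp
qed

lemma exist_p:
  assumes p: "0 < p" "p < alpha0 \<omega> c"
  shows "single_bump_solution \<omega> c (LL \<omega> c p) (prof (e3 \<omega> c p) (kf \<omega> c p) (bf \<omega> c p) (gf \<omega> c p))"
    and "e3 \<omega> c p > 0" "gf \<omega> c p > 0" "0 < kf \<omega> c p" "kf \<omega> c p < 1"
proof -
  have p': "0 < p" "p \<le> alpha0 \<omega> c" using p by auto
  note E = ee[OF p']
  have d1: "e3 \<omega> c p \<noteq> 0" and d2: "p - e1 \<omega> c p \<noteq> 0" using E by auto
  note EI = E_inst[OF d1 d2 kf_sq[OF p', unfolded k2f_def] bf_sq[OF p'] gf_sq[OF p'] a_rel[OF p'] c_rel]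
  have k2: "(kf \<omega> c p)\<^sup>2 < 1" using kf_bounds[OF p'] by (simp add: abs_square_less_1)
  have kpos: "kf \<omega> c p > 0" unfolding kf_def using k2f_pos[OF p] by simp
  show "single_bump_solution \<omega> c (LL \<omega> c p) (prof (e3 \<omega> c p) (kf \<omega> c p) (bf \<omega> c p) (gf \<omega> c p))"
    by (rule prof_bump[OF k2 _ _ gf_pos[OF p'] EI]) (use E kpos in \<open>auto simp: LL_def KK_def\<close>)
  show "e3 \<omega> c p > 0" "gf \<omega> c p > 0" "0 < kf \<omega> c p" "kf \<omega> c p < 1"
    using E gf_pos[OF p'] kpos kf_bounds[OF p'] by auto
qed

end


lemma ellF_cont_k:
  assumes "0 \<le> \<phi>" and "\<forall>k\<in>U. \<forall>\<theta>\<in>{0..\<phi>}. k\<^sup>2 * (sin \<theta>)\<^sup>2 < 1"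
  shows "continuous_on U (\<lambda>k. ellF \<phi> k)"
proof -
  have c: "continuous_on (U \<times> cbox 0 \<phi>) (\<lambda>(k, \<theta>). 1 / sqrt (1 - k\<^sup>2 * (sin \<theta>)\<^sup>2))"
  proof -
    have nz: "\<forall>z\<in>U \<times> cbox 0 \<phi>. sqrt (1 - (fst z)\<^sup>2 * (sin (snd z))\<^sup>2) \<noteq> 0"
    proof
      fix z assume "z \<in> U \<times> cbox 0 \<phi>"
      then have "(fst z)\<^sup>2 * (sin (snd z))\<^sup>2 < 1" using assms(2) by (auto simp: cbox_interval mem_Times_iff)
      then show "sqrt (1 - (fst z)\<^sup>2 * (sin (snd z))\<^sup>2) \<noteq> 0" by simp
    qed
    have "continuous_on (U \<times> cbox 0 \<phi>) (\<lambda>z. 1 / sqrt (1 - (fst z)\<^sup>2 * (sin (snd z))\<^sup>2))"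
      by (intro continuous_intros nz)
    then show ?thesis by (simp add: case_prod_beta')
  qed
  have "continuous_on U (\<lambda>k. integral (cbox 0 \<phi>) (\<lambda>\<theta>. 1 / sqrt (1 - k\<^sup>2 * (sin \<theta>)\<^sup>2)))"
    using integral_continuous_on_param[OF c] by simp
  then show ?thesis unfolding ellF_def using assms(1) by (simp add: cbox_interval)
qed

lemma KK_cont: "continuous_on {0..<1} KK"
  unfolding KK_def
  by (rule ellF_cont_k) (auto intro!: ksin_lt1 simp: abs_square_less_1)

lemma ellF1_cont: "0 \<le> \<phi> \<Longrightarrow> \<phi> < pi/2 \<Longrightarrow> continuous_on {0..1} (\<lambda>k. ellF \<phi> k)"
  by (rule ellF_cont_k) (auto intro!: ksin_lt1 simp: abs_square_le_1)

lemma F1_deriv: "\<bar>\<phi>\<bar> < pi/2 \<Longrightarrow> ((\<lambda>\<phi>. ellF \<phi> 1) has_real_derivative ellf 1 \<phi>) (at \<phi>)"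
  by (rule ellF_deriv) auto

lemma F1_strict: "0 \<le> a \<Longrightarrow> a < b \<Longrightarrow> b < pi/2 \<Longrightarrow> ellF a 1 < ellF b 1"
  by (rule DERIV_pos_imp_increasing[where f="\<lambda>\<phi>. ellF \<phi> 1"])
     (auto intro!: F1_deriv ellf_pos ksin_lt1 exI)

lemma F1_eq: "\<bar>\<phi>\<bar> < pi/2 \<Longrightarrow> ellF \<phi> 1 = artanh (sin \<phi>)"
proof -
  assume ph: "\<bar>\<phi>\<bar> < pi/2"
  define h where "h x = ellF x 1 - artanh (sin x)" for x
  have dh: "(h has_real_derivative 0) (at x)" if "\<bar>x\<bar> < pi/2" for x
  proof -
    have cpos: "cos x > 0" using that by (intro cos_gt_zero_pi) auto
    have s1: "\<bar>sin x\<bar> < 1" using sin_sq_lt1[OF that] by (simp add: abs_square_less_1)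
    have d2: "((\<lambda>x. artanh (sin x)) has_real_derivative 1 / (1 - (sin x)^2) * cos x) (at x)"
      by (rule DERIV_chain2[where f=artanh and g=sin, OF artanh_real_has_field_derivative[OF s1, where A=UNIV]]) simp
    have "(h has_real_derivative ellf 1 x - 1 / (1 - (sin x)^2) * cos x) (at x)"
      unfolding h_def[abs_def] by (intro DERIV_diff F1_deriv that d2)
    moreover have "ellf 1 x - 1 / (1 - (sin x)^2) * cos x = 0"
    proof -
      have "1 - (sin x)\<^sup>2 = (cos x)\<^sup>2" by (simp add: cos_squared_eq)
      then show ?thesis unfolding ellf_def using cpos by (simp add: power2_eq_square)
    qed
    ultimately show ?thesis by simp
  qed
  have ch: "continuous_on {a..b} h" if "-(pi/2) < a" "b < pi/2" for a b
    using dh that by (intro continuous_at_imp_continuous_on ballI DERIV_isCont) (force simp: abs_less_iff)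
  have "h \<phi> = h 0"
  proof (cases "\<phi> = 0")
    case False
    show ?thesis
    proof (cases "\<phi> > 0")
      case True
      show ?thesis
        by (rule DERIV_isconst2[OF True ch]) (use ph True dh in \<open>auto simp: abs_less_iff\<close>)
    next
      case f: False
      then have "\<phi> < 0" using False by simp
      have "h 0 = h \<phi>"
        by (rule DERIV_isconst2[OF \<open>\<phi> < 0\<close> ch]) (use ph \<open>\<phi> < 0\<close> dh in \<open>auto simp: abs_less_iff\<close>)
      then show ?thesis by simp
    qed
  qed simp
  then show ?thesis unfolding h_def by simp
qed

lemma F1_gd: "ellF (arcsin (tanh t)) 1 = t"
proof -
  have b: "-1 < tanh t" "tanh t < 1" using tanh_real_bounds[of t] by auto
  have "\<bar>arcsin (tanh t)\<bar> < pi/2" using arcsin_lt_bounded[OF b] by auto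
  then show ?thesis using F1_eq b by (simp add: artanh_tanh_real)
qed

lemma am_lim1:
  fixes F :: "'a filter"
  assumes tl: "(t \<longlongrightarrow> t0) F" and t0: "t0 \<ge> 0" and tnn: "eventually (\<lambda>z. t z \<ge> 0) F"
    and kl: "(k \<longlongrightarrow> 1) F" and kr: "eventually (\<lambda>z. 0 \<le> k z \<and> k z < 1) F"
  shows "((\<lambda>z. jacobi_am (t z) (k z)) \<longlongrightarrow> arcsin (tanh t0)) F"
proof -
  define \<phi>0 where "\<phi>0 = arcsin (tanh t0)"
  have b: "-1 < tanh t0" "tanh t0 < 1" using tanh_real_bounds[of t0] by auto
  have "arcsin 0 \<le> arcsin (tanh t0)" using b t0 by (intro arcsin_le_arcsin) auto
  then have ph0: "0 \<le> \<phi>0" "\<phi>0 < pi/2" unfolding \<phi>0_def using arcsin_lt_bounded[OF b] by auto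
  have F0: "ellF \<phi>0 1 = t0" unfolding \<phi>0_def by (rule F1_gd)
  have k2: "eventually (\<lambda>z. (k z)\<^sup>2 < 1) F" using kr by eventually_elim (simp add: abs_square_less_1)
  have limE: "((\<lambda>z. ellF a (k z)) \<longlongrightarrow> ellF a 1) F" if "0 \<le> a" "a < pi/2" for a
    by (rule continuous_on_tendsto_compose[OF ellF1_cont[OF that] kl]) (use kr in \<open>auto elim: eventually_mono\<close>)
  show ?thesis unfolding \<phi>0_def[symmetric]
  proof (rule order_tendstoI)
    fix b assume "\<phi>0 < b"
    define b' where "b' = min b (\<phi>0/2 + pi/4)"
    have u: "\<phi>0/2 + pi/4 < pi/2" "\<phi>0 < \<phi>0/2 + pi/4" using ph0 by linarith+
    have v: "b' \<le> \<phi>0/2 + pi/4" "b' \<le> b" "b' = b \<or> b' = \<phi>0/2 + pi/4" unfolding b'_def by auto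
    have b': "\<phi>0 < b'" "b' < pi/2" "0 \<le> b'" "b' \<le> b" using u v \<open>\<phi>0 < b\<close> ph0 by linarith+
    have lt: "t0 < ellF b' 1" using F1_strict[OF ph0(1) b'(1) b'(2)] F0 by simp
    define m where "m = t0/2 + ellF b' 1 / 2"
    have m: "t0 < m" "m < ellF b' 1" using lt unfolding m_def by auto
    have ev1: "eventually (\<lambda>z. m < ellF b' (k z)) F" using order_tendstoD(1)[OF limE[OF b'(3,2)] m(2)] .
    have ev2: "eventually (\<lambda>z. t z < m) F" using order_tendstoD(2)[OF tl m(1)] .
    show "eventually (\<lambda>z. jacobi_am (t z) (k z) < b) F"
      using ev1 ev2 k2
    proof eventually_elim
      case (elim z)
      then have "ellF (jacobi_am (t z) (k z)) (k z) < ellF b' (k z)" using am_ellF[of "k z"] by simp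
      then have "jacobi_am (t z) (k z) < b'" using ellF_less_iff[OF elim(3)] by blast
      then show ?case using b' by simp
    qed
  next
    fix a assume "a < \<phi>0"
    show "eventually (\<lambda>z. a < jacobi_am (t z) (k z)) F"
    proof (cases "a < 0")
      case True
      show ?thesis using tnn k2
      proof eventually_elim
        case (elim z)
        then have "jacobi_am 0 (k z) \<le> jacobi_am (t z) (k z)" using am_le_iff[OF elim(2)] by blast
        then show ?case using True am_0[OF elim(2)] by simp
      qed
    next
      case False
      then have a: "0 \<le> a" "a < pi/2" using \<open>a < \<phi>0\<close> ph0 by auto
      have lt: "ellF a 1 < t0" using F1_strict[OF a(1) \<open>a < \<phi>0\<close> ph0(2)] F0 by simp
      define m where "m = t0/2 + ellF a 1 / 2"
      have m: "m < t0" "ellF a 1 < m" using lt unfolding m_def by auto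
      have ev1: "eventually (\<lambda>z. ellF a (k z) < m) F" using order_tendstoD(2)[OF limE[OF a] m(2)] .
      have ev2: "eventually (\<lambda>z. m < t z) F" using order_tendstoD(1)[OF tl m(1)] .
      show ?thesis using ev1 ev2 k2
      proof eventually_elim
        case (elim z)
        then have "ellF a (k z) < ellF (jacobi_am (t z) (k z)) (k z)" using am_ellF[of "k z"] by simp
        then show ?case using ellF_less_iff[OF elim(3)] by blast
      qed
    qed
  qed
qed


context pc
begin

lemma sA_cont: "continuous_on S (sA \<omega> c)"
  unfolding sA_def[abs_def] Apoly_def by (intro continuous_intros)


lemma e_tends:
  assumes "(q \<longlongrightarrow> q0) F"
  shows "((\<lambda>z. sA \<omega> c (q z)) \<longlongrightarrow> sA \<omega> c q0) F"
    and "((\<lambda>z. e1 \<omega> c (q z)) \<longlongrightarrow> e1 \<omega> c q0) F"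
    and "((\<lambda>z. e3 \<omega> c (q z)) \<longlongrightarrow> e3 \<omega> c q0) F"
  unfolding e1_def e3_def sA_def Apoly_def using assms by (auto intro!: tendsto_intros)

lemma LL_cont: "continuous_on {0<..alpha0 \<omega> c} (LL \<omega> c)"
proof -
  let ?I = "{0<..alpha0 \<omega> c}"
  have ce: "continuous_on ?I (e1 \<omega> c)" "continuous_on ?I (e3 \<omega> c)"
    unfolding e1_def[abs_def] e3_def[abs_def] sA_def[abs_def] Apoly_def by (auto intro!: continuous_intros)
  have P: "\<forall>p\<in>?I. Pf \<omega> c p > 0" using Pf_pos by auto
  have cP: "continuous_on ?I (Pf \<omega> c)" unfolding Pf_def[abs_def] using ce by (auto intro!: continuous_intros)
  have cg: "continuous_on ?I (gf \<omega> c)" unfolding gf_def[abs_def] using cP P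
    by (auto intro!: continuous_intros)
  have ck2: "continuous_on ?I (k2f \<omega> c)" unfolding k2f_def[abs_def] using ce P
    by (intro continuous_intros) (auto simp: Pf_def)
  have ck: "continuous_on ?I (kf \<omega> c)" unfolding kf_def[abs_def] using ck2 by (intro continuous_intros)
  have cK: "continuous_on ?I (\<lambda>p. KK (kf \<omega> c p))"
    by (rule continuous_on_compose2[OF KK_cont ck]) (use kf_bounds in auto)
  show ?thesis unfolding LL_def[abs_def] using cg cK by (intro continuous_intros)
qed

lemma KK0: "KK 0 = pi/2"
  unfolding KK_def ellF_def by simp

lemma KK_ge: "0 \<le> k \<Longrightarrow> k < 1 \<Longrightarrow> KK k \<ge> pi/2"
  unfolding KK_def using ellF_ge[of k "pi/2"] by (simp add: abs_square_less_1)

lemma LL_alpha0: "LL \<omega> c (alpha0 \<omega> c) = L0 \<omega> c"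
proof -
  have a: "0 < alpha0 \<omega> c" using alpha0_pos .
  have k: "kf \<omega> c (alpha0 \<omega> c) = 0" unfolding kf_def k2f_alpha0 by simp
  have P: "Pf \<omega> c (alpha0 \<omega> c) = alpha0 \<omega> c * Qv" unfolding Pf_def e3_alpha0 e1_alpha0 by simp
  have A: "sqrt (Apoly \<omega> c (alpha0 \<omega> c)) = Qv" unfolding A_alpha0 using Qv_pos by simp
  show ?thesis unfolding LL_def gf_def k KK0 P L0_def A by simp
qed

lemma KK_top: "filterlim KK at_top (at_left 1)"
  unfolding filterlim_at_top
proof
  fix Z :: real
  define M where "M = max Z 0 + 1"
  define \<phi>1 where "\<phi>1 = arcsin (tanh M)"
  have b: "-1 < tanh M" "tanh M < 1" using tanh_real_bounds[of M] by auto
  have "arcsin 0 \<le> arcsin (tanh M)" using b by (intro arcsin_le_arcsin) (auto simp: M_def)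
  then have ph: "0 \<le> \<phi>1" "\<phi>1 < pi/2" unfolding \<phi>1_def using arcsin_lt_bounded[OF b] by auto
  have F: "ellF \<phi>1 1 = M" unfolding \<phi>1_def by (rule F1_gd)
  have ev01: "eventually (\<lambda>k. 0 \<le> k \<and> k < 1) (at_left (1::real))"
    by (rule eventually_at_leftI[of 0]) auto
  have lim: "((\<lambda>k. ellF \<phi>1 k) \<longlongrightarrow> ellF \<phi>1 1) (at_left 1)"
    by (rule continuous_on_tendsto_compose[OF ellF1_cont[OF ph] tendsto_ident_at]) (use ev01 in \<open>auto elim: eventually_mono\<close>)
  have "eventually (\<lambda>k. Z < ellF \<phi>1 k) (at_left 1)"
    using order_tendstoD(1)[OF lim] F unfolding M_def by simp
  then show "eventually (\<lambda>k. Z \<le> KK k) (at_left 1)"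
    using ev01
  proof eventually_elim
    case (elim k)
    then have "k\<^sup>2 < 1" by (simp add: abs_square_less_1)
    then have "ellF \<phi>1 k \<le> KK k" unfolding KK_def using ellF_le_iff[of k] ph by simp
    then show ?case using elim by simp
  qed
qed

lemma evF: "eventually (\<lambda>p. 0 < p \<and> p < alpha0 \<omega> c) (at_right 0)"
  by (rule eventually_at_rightI[where b="alpha0 \<omega> c"]) (use alpha0_pos in auto)

lemma sA0: "sA \<omega> c 0 = 8 * sqrt \<omega>"
  unfolding sA_def Apoly_def by (simp add: real_sqrt_mult)

lemma e1_0: "e1 \<omega> c 0 = 2*c - 4 * sqrt \<omega>"
  unfolding e1_def sA0 by simp

lemma e3_0: "e3 \<omega> c 0 = 2*c + 4 * sqrt \<omega>"
  unfolding e3_def sA0 by simp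

lemma e3_0_pos: "e3 \<omega> c 0 > 0"
  unfolding e3_0 using c_bounds by simp

lemma e1_0_neg: "\<omega> > c\<^sup>2/4 \<Longrightarrow> e1 \<omega> c 0 < 0"
  unfolding e1_0 using c_strict by simp

lemma e1_0_zero: "\<not> \<omega> > c\<^sup>2/4 \<Longrightarrow> e1 \<omega> c 0 = 0 \<and> e3 \<omega> c 0 = 4 * c"
proof -
  assume "\<not> \<omega> > c\<^sup>2/4"
  then have "\<omega> = c\<^sup>2/4" "c > 0" using hyp by auto
  then have "\<omega> = (c/2)\<^sup>2" by (simp add: power_divide)
  then have "sqrt \<omega> = c/2" using \<open>c > 0\<close> by simp
  then show ?thesis unfolding e1_0 e3_0 by simp
qed

lemmas e_lim0 = e_tends[OF tendsto_ident_at[of 0 "{0<..}"]]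

lemma Pf_lim: "((Pf \<omega> c) \<longlongrightarrow> e3 \<omega> c 0 * (0 - e1 \<omega> c 0)) (at_right 0)"
  unfolding Pf_def[abs_def] by (intro tendsto_intros e_lim0 tendsto_ident_at)

lemma LL_top: "filterlim (LL \<omega> c) at_top (at_right 0)"
proof (cases "\<omega> > c\<^sup>2/4")
  case True
  have e10: "e1 \<omega> c 0 < 0" using e1_0_neg[OF True] .
  have P0: "e3 \<omega> c 0 * (0 - e1 \<omega> c 0) > 0" using e10 e3_0_pos by (intro mult_pos_pos) auto
  have g: "((\<lambda>p. 2 * gf \<omega> c p) \<longlongrightarrow> 2 * (2 / sqrt (e3 \<omega> c 0 * (0 - e1 \<omega> c 0)))) (at_right 0)"
    unfolding gf_def using P0 by (intro tendsto_intros Pf_lim) auto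
  have k2: "((k2f \<omega> c) \<longlongrightarrow> 1) (at_right 0)"
  proof -
    have "((k2f \<omega> c) \<longlongrightarrow> (- e1 \<omega> c 0) * (e3 \<omega> c 0 - 0) / (e3 \<omega> c 0 * (0 - e1 \<omega> c 0))) (at_right 0)"
      unfolding k2f_def[abs_def] using P0 by (intro tendsto_intros e_lim0 tendsto_ident_at) auto
    moreover have "(- e1 \<omega> c 0) * (e3 \<omega> c 0 - 0) / (e3 \<omega> c 0 * (0 - e1 \<omega> c 0)) = 1"
      using P0 e10 e3_0_pos by simp
    ultimately show ?thesis by simp
  qed
  have kl: "((kf \<omega> c) \<longlongrightarrow> 1) (at_right 0)"
    unfolding kf_def[abs_def] using tendsto_real_sqrt[OF k2] by simp
  have kfl: "filterlim (kf \<omega> c) (at_left 1) (at_right 0)"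
    unfolding filterlim_at using kl evF
    by (auto elim!: eventually_mono dest: kf_bounds[of _, OF _ less_imp_le])
  have KKt: "filterlim (\<lambda>p. KK (kf \<omega> c p)) at_top (at_right 0)"
    by (rule filterlim_compose[OF KK_top kfl])
  have "filterlim (\<lambda>p. 2 * gf \<omega> c p * KK (kf \<omega> c p)) at_top (at_right 0)"
    by (rule filterlim_tendsto_pos_mult_at_top[OF g _ KKt]) (use P0 in simp)
  then show ?thesis unfolding LL_def[abs_def] .
next
  case False
  have z: "e1 \<omega> c 0 = 0" using e1_0_zero[OF False] by simp
  have sP: "filterlim (\<lambda>p. sqrt (Pf \<omega> c p)) (at_right 0) (at_right 0)"
    unfolding filterlim_at
  proof
    show "eventually (\<lambda>p. sqrt (Pf \<omega> c p) \<in> {0<..} \<and> sqrt (Pf \<omega> c p) \<noteq> 0) (at_right 0)"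
      using evF by eventually_elim (use Pf_pos in \<open>force simp: less_imp_le\<close>)
    show "((\<lambda>p. sqrt (Pf \<omega> c p)) \<longlongrightarrow> 0) (at_right 0)"
      using tendsto_real_sqrt[OF Pf_lim] z by simp
  qed
  have "filterlim (\<lambda>p. inverse (sqrt (Pf \<omega> c p))) at_top (at_right 0)"
    by (rule filterlim_compose[OF filterlim_inverse_at_top_right sP])
  then have gt: "filterlim (\<lambda>p. pi * gf \<omega> c p) at_top (at_right 0)"
    unfolding gf_def
    by (intro filterlim_tendsto_pos_mult_at_top[OF tendsto_const]) (auto simp: divide_inverse intro: filterlim_tendsto_pos_mult_at_top[OF tendsto_const])
  show ?thesis
  proof (rule filterlim_at_top_mono[OF gt])
    show "eventually (\<lambda>p. pi * gf \<omega> c p \<le> LL \<omega> c p) (at_right 0)"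
      using evF
    proof eventually_elim
      case (elim p)
      then have p: "0 < p" "p \<le> alpha0 \<omega> c" by auto
      have "pi/2 \<le> KK (kf \<omega> c p)" using KK_ge kf_bounds[OF p] by auto
      moreover have "gf \<omega> c p > 0" using gf_pos[OF p] .
      ultimately have "gf \<omega> c p * (pi/2) \<le> gf \<omega> c p * KK (kf \<omega> c p)" by simp
      then show ?case unfolding LL_def by (simp add: algebra_simps)
    qed
  qed
qed

end


lemma ellF_upper:
  assumes k2: "k\<^sup>2 < 1" and ph: "0 \<le> \<phi>" "\<phi> < 1"
  shows "ellF \<phi> k \<le> \<phi> / sqrt (1 - \<phi>\<^sup>2)"
proof -
  define C where "C = 1 / sqrt (1 - \<phi>\<^sup>2)"
  have p2: "\<phi>\<^sup>2 < 1" using ph by (simp add: abs_square_less_1)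
  have "(\<lambda>x. x * C - ellF x k) 0 \<le> (\<lambda>x. x * C - ellF x k) \<phi>"
  proof (rule DERIV_nonneg_imp_nondecreasing[OF ph(1)])
    fix x assume x: "0 \<le> x" "x \<le> \<phi>"
    have "(sin x)\<^sup>2 \<le> x\<^sup>2"
    proof -
      have "0 \<le> sin x" using x ph pi_gt3 by (intro sin_ge_zero) auto
      moreover have "sin x \<le> x" using x by (intro sin_x_le_x)
      ultimately show ?thesis by (simp add: power_mono)
    qed
    moreover have "x\<^sup>2 \<le> \<phi>\<^sup>2" using x by (simp add: power_mono)
    moreover have "k\<^sup>2 * (sin x)\<^sup>2 \<le> (sin x)\<^sup>2" using k2 by (simp add: mult_left_le_one_le)
    ultimately have le: "1 - \<phi>\<^sup>2 \<le> 1 - k\<^sup>2 * (sin x)\<^sup>2" by linarith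
    have "ellf k x \<le> C" unfolding ellf_def C_def
      using le p2 by (intro divide_left_mono real_sqrt_le_mono mult_pos_pos) auto
    then show "\<exists>y. ((\<lambda>x. x * C - ellF x k) has_real_derivative y) (at x) \<and> 0 \<le> y"
      by (intro exI[of _ "1 * C - ellf k x"]) (auto intro!: derivative_eq_intros ellF_d[OF k2])
  qed
  then show ?thesis unfolding C_def by simp
qed

lemma am_bounds:
  assumes k2: "k\<^sup>2 < 1" and t: "0 < t" "t < 1"
  shows "t * sqrt (1 - t\<^sup>2) \<le> jacobi_am t k" "jacobi_am t k \<le> t" "0 < jacobi_am t k"
proof -
  let ?p = "jacobi_am t k"
  have pos: "0 < ?p" using am_strict[OF k2 t(1)] am_0[OF k2] by simp
  have e: "ellF ?p k = t" by (rule am_ellF[OF k2])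
  have le: "?p \<le> t" using ellF_ge[OF k2, of ?p] pos e by simp
  have "t \<le> ?p / sqrt (1 - ?p\<^sup>2)" using ellF_upper[OF k2, of ?p] pos le t e by simp
  moreover have s: "sqrt (1 - ?p\<^sup>2) > 0" using le t pos by (simp add: abs_square_less_1)
  ultimately have "t * sqrt (1 - ?p\<^sup>2) \<le> ?p" by (simp add: le_divide_eq)
  moreover have "sqrt (1 - t\<^sup>2) \<le> sqrt (1 - ?p\<^sup>2)" using le pos by (intro real_sqrt_le_mono) (simp add: power_mono)
  ultimately show "t * sqrt (1 - t\<^sup>2) \<le> ?p" using t by (smt (verit) mult_left_mono)
  show "?p \<le> t" "0 < ?p" using le pos by auto
qed

lemma sinc_lim: "((\<lambda>y. sin y / y) \<longlongrightarrow> 1) (at (0::real))"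
proof -
  have "(sin has_real_derivative cos 0) (at 0)" by (rule DERIV_sin)
  then have "((\<lambda>y::real. (sin y - sin 0) / (y - 0)) \<longlongrightarrow> cos 0) (at 0)"
    by (simp only: has_field_derivative_iff)
  then show ?thesis by simp
qed

lemma am_lim0:
  fixes F :: "'a filter"
  assumes tl: "(t \<longlongrightarrow> 0) F" and tp: "eventually (\<lambda>z. 0 < t z) F"
    and k2: "eventually (\<lambda>z. (k z)\<^sup>2 < 1) F"
  shows "((\<lambda>z. (sin (jacobi_am (t z) (k z)))\<^sup>2 / (t z)\<^sup>2) \<longlongrightarrow> 1) F"
proof -
  let ?p = "\<lambda>z. jacobi_am (t z) (k z)"
  have t1: "eventually (\<lambda>z. t z < 1) F" using order_tendstoD(2)[OF tl, of 1] by simp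
  have B: "eventually (\<lambda>z. t z * sqrt (1 - (t z)\<^sup>2) \<le> ?p z \<and> ?p z \<le> t z \<and> 0 < ?p z) F"
    using k2 tp t1 by eventually_elim (use am_bounds in blast)
  have r1: "((\<lambda>z. ?p z / t z) \<longlongrightarrow> 1) F"
  proof (rule real_tendsto_sandwich[where f="\<lambda>z. sqrt (1 - (t z)\<^sup>2)" and h="\<lambda>z. 1"])
    show "eventually (\<lambda>z. sqrt (1 - (t z)\<^sup>2) \<le> ?p z / t z) F"
      using B tp by eventually_elim (simp add: le_divide_eq mult.commute)
    show "eventually (\<lambda>z. ?p z / t z \<le> 1) F"
      using B tp by eventually_elim simp
    show "((\<lambda>z. sqrt (1 - (t z)\<^sup>2)) \<longlongrightarrow> 1) F"
      using tendsto_real_sqrt[OF tendsto_diff[OF tendsto_const tendsto_power[OF tl, of 2]], of 1] by simp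
  qed simp
  have p0: "(?p \<longlongrightarrow> 0) F"
  proof (rule real_tendsto_sandwich[where f="\<lambda>z. 0" and h="t"])
    show "eventually (\<lambda>z. 0 \<le> ?p z) F" using B by eventually_elim simp
    show "eventually (\<lambda>z. ?p z \<le> t z) F" using B by eventually_elim simp
  qed (use tl in simp_all)
  have pf: "filterlim ?p (at 0) F"
    unfolding filterlim_at using p0 B by (auto elim: eventually_mono)
  have r2: "((\<lambda>z. sin (?p z) / ?p z) \<longlongrightarrow> 1) F"
    by (rule filterlim_compose[OF sinc_lim pf])
  have "((\<lambda>z. ((sin (?p z) / ?p z) * (?p z / t z))\<^sup>2) \<longlongrightarrow> (1 * 1)\<^sup>2) F"
    by (intro tendsto_intros r1 r2)
  then have L: "((\<lambda>z. ((sin (?p z) / ?p z) * (?p z / t z))\<^sup>2) \<longlongrightarrow> 1) F" by simp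
  show ?thesis
  proof (rule Lim_transform_eventually[OF L])
    show "eventually (\<lambda>z. ((sin (?p z) / ?p z) * (?p z / t z))\<^sup>2 = (sin (?p z))\<^sup>2 / (t z)\<^sup>2) F"
      using B by eventually_elim (simp add: power_divide)
  qed
qed


lemma q_gen: "C \<noteq> 0 \<Longrightarrow> D \<noteq> 0 \<Longrightarrow> K \<noteq> (0::real) \<Longrightarrow> (1/C) / (D / (K * C)) = K / D"
  by (simp add: field_simps)

lemma q_gen2: "D \<noteq> 0 \<Longrightarrow> E * K = 4 * M \<Longrightarrow> E * (K / D) = M / (D / (4::real))"
  by (simp add: field_simps)

lemma sol_alg_core:
  fixes r c shv chv m :: real
  assumes r: "r > 0" and c: "c < 2*r" and chv: "chv\<^sup>2 = shv\<^sup>2 + 1" "chv > 0" and m: "m\<^sup>2 = 4*r\<^sup>2 - c\<^sup>2"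
  shows "(2*c+4*r) * ((1 - shv\<^sup>2/chv\<^sup>2) / (1 + ((2*c+4*r - 0)/(0 - (2*c-4*r))) * (shv\<^sup>2/chv\<^sup>2)))
       = m\<^sup>2 / (r * ((chv\<^sup>2 + shv\<^sup>2) - c/(2*r)))"
proof -
  have d1: "4*r - 2*c > 0" using c by simp
  have s0: "shv\<^sup>2 \<ge> 0" by simp
  have D: "8*r* shv\<^sup>2 + 4*r - 2*c > 0" using d1 s0 r by (smt (verit) mult_nonneg_nonneg)
  have ch0: "chv\<^sup>2 > 0" using chv(2) by simp
  have e1: "1 - shv\<^sup>2/chv\<^sup>2 = 1/chv\<^sup>2" using ch0 chv(1) by (simp add: field_simps)
  have nz: "4*r - 2*c \<noteq> 0" "chv\<^sup>2 \<noteq> 0" using d1 ch0 by auto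
  have m0: "0 - (2*c-4*r) = 4*r - 2*c" by simp
  have e2': "1 + ((2*c+4*r - 0)/(4*r - 2*c)) * (shv\<^sup>2/chv\<^sup>2) = (chv\<^sup>2 * (4*r - 2*c) + (2*c+4*r) * shv\<^sup>2) / ((4*r - 2*c) * chv\<^sup>2)"
    using nz by (simp add: field_simps)
  have e2: "1 + ((2*c+4*r - 0)/(0 - (2*c-4*r))) * (shv\<^sup>2/chv\<^sup>2) = (8*r * shv\<^sup>2 + 4*r - 2*c) / ((4*r - 2*c) * chv\<^sup>2)"
    unfolding m0 e2' unfolding chv(1) by (simp add: algebra_simps)
  have e3: "r * ((chv\<^sup>2 + shv\<^sup>2) - c/(2*r)) = (8*r* shv\<^sup>2 + 4*r - 2*c)/4"
    using r unfolding chv(1) by (simp add: field_simps)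
  have q: "(1/chv\<^sup>2) / ((8*r * shv\<^sup>2 + 4*r - 2*c) / ((4*r - 2*c) * chv\<^sup>2)) = (4*r - 2*c) / (8*r * shv\<^sup>2 + 4*r - 2*c)"
    using nz D by (intro q_gen) auto
  have "(2*c+4*r) * (4*r - 2*c) = 4 * m\<^sup>2" unfolding m by (simp add: algebra_simps power2_eq_square)
  then show ?thesis unfolding e1 e2 e3 q using D by (intro q_gen2) auto
qed

context pc
begin

lemma Ph_Gs: "prof \<eta> k \<beta> g x = Gs \<eta> k \<beta> ((sin (jacobi_am (x / (2*g)) k))\<^sup>2)"
  unfolding prof_def Fp_Gs by simp

lemma gf_lim_pos: "\<omega> > c\<^sup>2/4 \<Longrightarrow> ((gf \<omega> c) \<longlongrightarrow> 2 / sqrt (e3 \<omega> c 0 * (0 - e1 \<omega> c 0))) (at_right 0)"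
  unfolding gf_def[abs_def] using e1_0_neg e3_0_pos
  by (intro tendsto_intros Pf_lim) (auto intro!: mult_pos_pos)

lemma kf_lim_pos: "\<omega> > c\<^sup>2/4 \<Longrightarrow> ((kf \<omega> c) \<longlongrightarrow> 1) (at_right 0)"
proof -
  assume a: "\<omega> > c\<^sup>2/4"
  have e10: "e1 \<omega> c 0 < 0" using e1_0_neg[OF a] .
  have P0: "e3 \<omega> c 0 * (0 - e1 \<omega> c 0) > 0" using e10 e3_0_pos by (intro mult_pos_pos) auto
  have "((k2f \<omega> c) \<longlongrightarrow> (- e1 \<omega> c 0) * (e3 \<omega> c 0 - 0) / (e3 \<omega> c 0 * (0 - e1 \<omega> c 0))) (at_right 0)"
    unfolding k2f_def[abs_def] using P0 by (intro tendsto_intros e_lim0 tendsto_ident_at) auto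
  moreover have "(- e1 \<omega> c 0) * (e3 \<omega> c 0 - 0) / (e3 \<omega> c 0 * (0 - e1 \<omega> c 0)) = 1"
    using P0 e10 e3_0_pos by simp
  ultimately have "((k2f \<omega> c) \<longlongrightarrow> 1) (at_right 0)" by simp
  then show ?thesis unfolding kf_def[abs_def] using tendsto_real_sqrt by fastforce
qed

lemma gf_top0: "\<not> \<omega> > c\<^sup>2/4 \<Longrightarrow> filterlim (gf \<omega> c) at_top (at_right 0)"
proof -
  assume False: "\<not> \<omega> > c\<^sup>2/4"
  have z: "e1 \<omega> c 0 = 0" using e1_0_zero[OF False] by simp
  have sP: "filterlim (\<lambda>p. sqrt (Pf \<omega> c p)) (at_right 0) (at_right 0)"
    unfolding filterlim_at
  proof
    show "eventually (\<lambda>p. sqrt (Pf \<omega> c p) \<in> {0<..} \<and> sqrt (Pf \<omega> c p) \<noteq> 0) (at_right 0)"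
      using evF by eventually_elim (use Pf_pos in \<open>force simp: less_imp_le\<close>)
    show "((\<lambda>p. sqrt (Pf \<omega> c p)) \<longlongrightarrow> 0) (at_right 0)"
      using tendsto_real_sqrt[OF Pf_lim] z by simp
  qed
  have "filterlim (\<lambda>p. inverse (sqrt (Pf \<omega> c p))) at_top (at_right 0)"
    by (rule filterlim_compose[OF filterlim_inverse_at_top_right sP])
  then have "filterlim (\<lambda>p. 2 * inverse (sqrt (Pf \<omega> c p))) at_top (at_right 0)"
    by (intro filterlim_tendsto_pos_mult_at_top[OF tendsto_const]) auto
  then show ?thesis unfolding gf_def[abs_def] by (simp add: divide_inverse)
qed

lemma sol_lim_pos:
  assumes a: "\<omega> > c\<^sup>2/4" and x: "x \<ge> 0"
  shows "((\<lambda>p. prof (e3 \<omega> c p) (kf \<omega> c p) (bf \<omega> c p) (gf \<omega> c p) x) \<longlongrightarrow> soliton \<omega> c x) (at_right 0)"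
proof -
  let ?F = "at_right (0::real)"
  define E3 where "E3 = e3 \<omega> c 0"
  define E1 where "E1 = e1 \<omega> c 0"
  define g0 where "g0 = 2 / sqrt (E3 * (0 - E1))"
  define t0 where "t0 = x / (2 * g0)"
  define T where "T = (tanh t0)\<^sup>2"
  define b0 where "b0 = (E3 - 0) / (0 - E1)"
  have E10: "E1 < 0" unfolding E1_def using e1_0_neg[OF a] .
  have E30: "E3 > 0" unfolding E3_def using e3_0_pos .
  have "E3 * (0 - E1) > 0" using E10 E30 by (intro mult_pos_pos) auto
  then have g0: "g0 > 0" unfolding g0_def by simp
  have gl: "((gf \<omega> c) \<longlongrightarrow> g0) ?F" unfolding g0_def E1_def E3_def using gf_lim_pos[OF a] .
  have tl: "((\<lambda>p. x / (2 * gf \<omega> c p)) \<longlongrightarrow> t0) ?F"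
    unfolding t0_def using g0 by (intro tendsto_intros gl) auto
  have t0nn: "t0 \<ge> 0" unfolding t0_def using x g0 by simp
  have tnn: "eventually (\<lambda>p. x / (2 * gf \<omega> c p) \<ge> 0) ?F"
    using evF by eventually_elim (use gf_pos x in \<open>force simp: less_imp_le\<close>)
  have kl: "((kf \<omega> c) \<longlongrightarrow> 1) ?F" using kf_lim_pos[OF a] .
  have kr: "eventually (\<lambda>p. 0 \<le> kf \<omega> c p \<and> kf \<omega> c p < 1) ?F"
    using evF by eventually_elim (use kf_bounds in \<open>force simp: less_imp_le\<close>)
  have am: "((\<lambda>p. jacobi_am (x / (2 * gf \<omega> c p)) (kf \<omega> c p)) \<longlongrightarrow> arcsin (tanh t0)) ?F"
    by (rule am_lim1[OF tl t0nn tnn kl kr])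
  have b: "-1 < tanh t0" "tanh t0 < 1" using tanh_real_bounds[of t0] by auto
  have Sl: "((\<lambda>p. (sin (jacobi_am (x / (2 * gf \<omega> c p)) (kf \<omega> c p)))\<^sup>2) \<longlongrightarrow> T) ?F"
    using tendsto_power[OF tendsto_sin[OF am], of 2] b unfolding T_def by simp
  have bl: "((\<lambda>p. (e3 \<omega> c p - p) / (p - e1 \<omega> c p)) \<longlongrightarrow> b0) ?F"
    unfolding b0_def E3_def E1_def using E10
    by (intro tendsto_intros e_lim0 tendsto_ident_at) (auto simp: E1_def)
  have bl2: "((\<lambda>p. (bf \<omega> c p)\<^sup>2) \<longlongrightarrow> b0) ?F"
  proof (rule Lim_transform_eventually[OF bl])
    show "eventually (\<lambda>p. (e3 \<omega> c p - p) / (p - e1 \<omega> c p) = (bf \<omega> c p)\<^sup>2) ?F"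
      using evF by eventually_elim (use bf_sq in \<open>force simp: less_imp_le\<close>)
  qed
  have e3l: "((e3 \<omega> c) \<longlongrightarrow> E3) ?F" unfolding E3_def using e_lim0(3) by simp
  have T0a: "T \<ge> 0" unfolding T_def by simp
  have T0b: "b0 \<ge> 0" unfolding b0_def using E10 E30 by (intro divide_nonneg_pos) auto
  note T0 = T0a T0b
  have "((\<lambda>p. sqrt (e3 \<omega> c p) * sqrt ((1 - (kf \<omega> c p)\<^sup>2 * (sin (jacobi_am (x / (2 * gf \<omega> c p)) (kf \<omega> c p)))\<^sup>2)
         / (1 + (bf \<omega> c p)\<^sup>2 * (sin (jacobi_am (x / (2 * gf \<omega> c p)) (kf \<omega> c p)))\<^sup>2)))
        \<longlongrightarrow> sqrt E3 * sqrt ((1 - 1\<^sup>2 * T) / (1 + b0 * T))) ?F"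
    using T0 by (intro tendsto_intros e3l kl Sl bl2) (auto simp: add_nonneg_eq_0_iff)
  moreover have "sqrt E3 * sqrt ((1 - 1\<^sup>2 * T) / (1 + b0 * T)) = soliton \<omega> c x"
  proof -
    define r where "r = sqrt \<omega>"
    have r: "r > 0" "r\<^sup>2 = \<omega>" unfolding r_def using om_pos by auto
    have cr: "c < 2*r" unfolding r_def using c_strict[OF a] .
    have E3r: "E3 = 2*c + 4*r" unfolding E3_def r_def e3_0 ..
    have E1r: "E1 = 2*c - 4*r" unfolding E1_def r_def e1_0 ..
    define m where "m = sqrt (4*\<omega> - c\<^sup>2)"
    have m: "m > 0" "m\<^sup>2 = 4*r\<^sup>2 - c\<^sup>2" unfolding m_def using a r by auto
    have P: "E3 * (0 - E1) = (2*m)\<^sup>2" unfolding E3r E1r using m(2) by (simp add: power2_eq_square algebra_simps)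
    have g0m: "g0 = 1/m" unfolding g0_def P using m(1) by (simp add: real_sqrt_mult)
    have t0m: "2 * t0 = m * x" unfolding t0_def g0m using m by (simp add: field_simps)
    define chv where "chv = cosh t0"
    define shv where "shv = sinh t0"
    have chs: "chv\<^sup>2 = shv\<^sup>2 + 1" "chv > 0" unfolding chv_def shv_def by (simp_all add: cosh_square_eq)
    have Tsc: "T = shv\<^sup>2 / chv\<^sup>2" unfolding T_def chv_def shv_def tanh_def by (simp add: power_divide)
    have cosh2: "cosh (m * x) = chv\<^sup>2 + shv\<^sup>2" unfolding t0m[symmetric] chv_def shv_def by (rule cosh_double)
    have core: "E3 * ((1 - 1\<^sup>2 * T) / (1 + b0 * T)) = m\<^sup>2 / (r * ((chv\<^sup>2 + shv\<^sup>2) - c/(2*r)))"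
      using sol_alg_core[OF r(1) cr chs m(2)] unfolding b0_def E3r E1r Tsc by simp
    have E3pos: "E3 \<ge> 0" using E30 by simp
    have "sqrt E3 * sqrt ((1 - 1\<^sup>2 * T) / (1 + b0 * T)) = sqrt (E3 * ((1 - 1\<^sup>2 * T) / (1 + b0 * T)))"
      by (simp only: real_sqrt_mult)
    also have "\<dots> = sqrt ((4 * \<omega> - c\<^sup>2) / (sqrt \<omega> * (cosh (sqrt (4 * \<omega> - c\<^sup>2) * x) - c / (2 * sqrt \<omega>))))"
      unfolding core cosh2[symmetric] m_def r_def using m(1) unfolding m_def by simp
    also have "\<dots> = soliton \<omega> c x" unfolding soliton_def using a by simp
    finally show ?thesis .
  qed
  moreover have "eventually (\<lambda>p. sqrt (e3 \<omega> c p) * sqrt ((1 - (kf \<omega> c p)\<^sup>2 * (sin (jacobi_am (x / (2 * gf \<omega> c p)) (kf \<omega> c p)))\<^sup>2)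
         / (1 + (bf \<omega> c p)\<^sup>2 * (sin (jacobi_am (x / (2 * gf \<omega> c p)) (kf \<omega> c p)))\<^sup>2))
       = prof (e3 \<omega> c p) (kf \<omega> c p) (bf \<omega> c p) (gf \<omega> c p) x) ?F"
    by (simp add: Ph_Gs Gs_def)
  ultimately show ?thesis using Lim_transform_eventually by fastforce
qed

lemma sol_lim_zero:
  assumes a: "\<not> \<omega> > c\<^sup>2/4" and x: "x > 0"
  shows "((\<lambda>p. prof (e3 \<omega> c p) (kf \<omega> c p) (bf \<omega> c p) (gf \<omega> c p) x) \<longlongrightarrow> soliton \<omega> c x) (at_right 0)"
proof -
  let ?F = "at_right (0::real)"
  let ?t = "\<lambda>p. x / (2 * gf \<omega> c p)"
  let ?S = "\<lambda>p. (sin (jacobi_am (?t p) (kf \<omega> c p)))\<^sup>2"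
  have z: "e1 \<omega> c 0 = 0" "e3 \<omega> c 0 = 4 * c" using e1_0_zero[OF a] by auto
  have cpos: "c > 0" using hyp a by auto
  have g2: "filterlim (\<lambda>p. 2 * gf \<omega> c p) at_top ?F"
    by (rule filterlim_tendsto_pos_mult_at_top[OF tendsto_const _ gf_top0[OF a]]) simp
  have tl: "(?t \<longlongrightarrow> 0) ?F"
    by (rule tendsto_divide_0[OF tendsto_const filterlim_at_top_imp_at_infinity[OF g2]])
  have tp: "eventually (\<lambda>p. 0 < ?t p) ?F"
    using evF by eventually_elim (use gf_pos x in \<open>force simp: less_imp_le\<close>)
  have k2: "eventually (\<lambda>p. (kf \<omega> c p)\<^sup>2 < 1) ?F"
    using evF by eventually_elim (use kf_bounds in \<open>force simp: less_imp_le abs_square_less_1\<close>)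
  have R: "((\<lambda>p. ?S p / (?t p)\<^sup>2) \<longlongrightarrow> 1) ?F" by (rule am_lim0[OF tl tp k2])
  have Sl: "(?S \<longlongrightarrow> 0) ?F"
  proof -
    have "((\<lambda>p. (?S p / (?t p)\<^sup>2) * (?t p)\<^sup>2) \<longlongrightarrow> 1 * 0\<^sup>2) ?F" by (intro tendsto_intros R tl)
    then have L: "((\<lambda>p. (?S p / (?t p)\<^sup>2) * (?t p)\<^sup>2) \<longlongrightarrow> 0) ?F" by simp
    show ?thesis
      by (rule Lim_transform_eventually[OF L]) (use tp in \<open>auto elim: eventually_mono\<close>)
  qed
  have e3l: "((e3 \<omega> c) \<longlongrightarrow> 4 * c) ?F" using e_lim0(3) z by simp
  have btl: "((\<lambda>p. (e3 \<omega> c p - p) * e3 \<omega> c p * x\<^sup>2 / 16) \<longlongrightarrow> (4*c - 0) * (4*c) * x\<^sup>2 / 16) ?F"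
    by (intro tendsto_intros e3l tendsto_ident_at) simp_all
  have bt: "eventually (\<lambda>p. (e3 \<omega> c p - p) * e3 \<omega> c p * x\<^sup>2 / 16 = (bf \<omega> c p)\<^sup>2 * (?t p)\<^sup>2) ?F"
    using evF
  proof eventually_elim
    case (elim p)
    then have p: "0 < p" "p \<le> alpha0 \<omega> c" by auto
    note E = ee[OF p]
    have "(bf \<omega> c p)\<^sup>2 * (?t p)\<^sup>2 = (e3 \<omega> c p - p) / (p - e1 \<omega> c p) * (x\<^sup>2 / (4 * (gf \<omega> c p)\<^sup>2))"
      unfolding bf_sq[OF p] by (simp add: power_divide power_mult_distrib)
    also have "\<dots> = (e3 \<omega> c p - p) * e3 \<omega> c p * x\<^sup>2 / 16"
      unfolding gf_sq[OF p] using E by (simp add: field_simps)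
    finally show ?case by simp
  qed
  have btl2: "((\<lambda>p. (bf \<omega> c p)\<^sup>2 * (?t p)\<^sup>2) \<longlongrightarrow> c\<^sup>2 * x\<^sup>2) ?F"
  proof -
    have e: "(4*c - 0) * (4*c) * x\<^sup>2 / 16 = c\<^sup>2 * x\<^sup>2" by (simp add: power2_eq_square)
    show ?thesis using Lim_transform_eventually[OF btl bt] unfolding e .
  qed
  have bS: "((\<lambda>p. (bf \<omega> c p)\<^sup>2 * ?S p) \<longlongrightarrow> c\<^sup>2 * x\<^sup>2) ?F"
  proof -
    have "((\<lambda>p. ((bf \<omega> c p)\<^sup>2 * (?t p)\<^sup>2) * (?S p / (?t p)\<^sup>2)) \<longlongrightarrow> c\<^sup>2 * x\<^sup>2 * 1) ?F"
      by (intro tendsto_intros btl2 R)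
    then have L: "((\<lambda>p. ((bf \<omega> c p)\<^sup>2 * (?t p)\<^sup>2) * (?S p / (?t p)\<^sup>2)) \<longlongrightarrow> c\<^sup>2 * x\<^sup>2) ?F" by simp
    show ?thesis
      by (rule Lim_transform_eventually[OF L]) (use tp in \<open>auto elim: eventually_mono\<close>)
  qed
  have kS: "((\<lambda>p. (kf \<omega> c p)\<^sup>2 * ?S p) \<longlongrightarrow> 0) ?F"
  proof (rule real_tendsto_sandwich[where f="\<lambda>p. 0" and h="?S"])
    show "eventually (\<lambda>p. 0 \<le> (kf \<omega> c p)\<^sup>2 * ?S p) ?F" by simp
    show "eventually (\<lambda>p. (kf \<omega> c p)\<^sup>2 * ?S p \<le> ?S p) ?F"
      using k2 by eventually_elim (simp add: mult_left_le_one_le)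
  qed (use Sl in simp_all)
  have "((\<lambda>p. sqrt (e3 \<omega> c p) * sqrt ((1 - (kf \<omega> c p)\<^sup>2 * ?S p) / (1 + (bf \<omega> c p)\<^sup>2 * ?S p)))
        \<longlongrightarrow> sqrt (4*c) * sqrt ((1 - 0) / (1 + c\<^sup>2 * x\<^sup>2))) ?F"
    by (intro tendsto_intros e3l kS bS) (auto simp: add_nonneg_eq_0_iff)
  moreover have "sqrt (4*c) * sqrt ((1 - 0) / (1 + c\<^sup>2 * x\<^sup>2)) = soliton \<omega> c x"
    unfolding soliton_def using a cpos by (simp add: real_sqrt_mult[symmetric] power_mult_distrib add.commute)
  moreover have "eventually (\<lambda>p. sqrt (e3 \<omega> c p) * sqrt ((1 - (kf \<omega> c p)\<^sup>2 * ?S p) / (1 + (bf \<omega> c p)\<^sup>2 * ?S p))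
       = prof (e3 \<omega> c p) (kf \<omega> c p) (bf \<omega> c p) (gf \<omega> c p) x) ?F"
    by (simp add: Ph_Gs Gs_def)
  ultimately show ?thesis using Lim_transform_eventually by fastforce
qed

lemma sol_lim_0:
  shows "((\<lambda>p. prof (e3 \<omega> c p) (kf \<omega> c p) (bf \<omega> c p) (gf \<omega> c p) 0) \<longlongrightarrow> soliton \<omega> c 0) (at_right 0)"
proof (cases "\<omega> > c\<^sup>2/4")
  case True then show ?thesis using sol_lim_pos by simp
next
  case False
  have z: "e3 \<omega> c 0 = 4 * c" using e1_0_zero[OF False] by auto
  have e3l: "((e3 \<omega> c) \<longlongrightarrow> 4 * c) (at_right 0)" using e_lim0(3) z by simp
  have "((\<lambda>p. sqrt (e3 \<omega> c p)) \<longlongrightarrow> sqrt (4 * c)) (at_right 0)" by (intro tendsto_intros e3l)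
  moreover have "sqrt (4 * c) = soliton \<omega> c 0" unfolding soliton_def using False by simp
  moreover have "eventually (\<lambda>p. sqrt (e3 \<omega> c p) = prof (e3 \<omega> c p) (kf \<omega> c p) (bf \<omega> c p) (gf \<omega> c p) 0) (at_right 0)"
    using evF
  proof eventually_elim
    case (elim p)
    then have p: "0 < p" "p \<le> alpha0 \<omega> c" by auto
    have "(kf \<omega> c p)\<^sup>2 < 1" using kf_bounds[OF p] by (simp add: abs_square_less_1)
    then show ?case by (simp add: Ph_Gs Gs_def am_0)
  qed
  ultimately show ?thesis using Lim_transform_eventually by fastforce
qed

lemma soliton_even: "soliton \<omega> c (- x) = soliton \<omega> c x"
  unfolding soliton_def by simp

lemma sol_lim: "((\<lambda>p. prof (e3 \<omega> c p) (kf \<omega> c p) (bf \<omega> c p) (gf \<omega> c p) x) \<longlongrightarrow> soliton \<omega> c x) (at_right 0)"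
proof -
  have pos: "((\<lambda>p. prof (e3 \<omega> c p) (kf \<omega> c p) (bf \<omega> c p) (gf \<omega> c p) y) \<longlongrightarrow> soliton \<omega> c y) (at_right 0)"
    if "y \<ge> 0" for y
  proof (cases "y = 0")
    case True then show ?thesis using sol_lim_0 by simp
  next
    case False
    then have "y > 0" using that by simp
    then show ?thesis using sol_lim_pos sol_lim_zero that by (cases "\<omega> > c\<^sup>2/4") auto
  qed
  show ?thesis
  proof (cases "x \<ge> 0")
    case True then show ?thesis using pos by simp
  next
    case False
    have L: "((\<lambda>p. prof (e3 \<omega> c p) (kf \<omega> c p) (bf \<omega> c p) (gf \<omega> c p) (-x)) \<longlongrightarrow> soliton \<omega> c x) (at_right 0)"
      using pos[of "-x"] False soliton_even[of x] by simp
    show ?thesis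
    proof (rule Lim_transform_eventually[OF L])
      show "eventually (\<lambda>p. prof (e3 \<omega> c p) (kf \<omega> c p) (bf \<omega> c p) (gf \<omega> c p) (-x)
                          = prof (e3 \<omega> c p) (kf \<omega> c p) (bf \<omega> c p) (gf \<omega> c p) x) (at_right 0)"
        using evF
      proof eventually_elim
        case (elim p)
        then have p: "0 < p" "p \<le> alpha0 \<omega> c" by auto
        have k2: "(kf \<omega> c p)\<^sup>2 < 1" using kf_bounds[OF p] by (simp add: abs_square_less_1)
        show ?case unfolding prof_def using am_odd[OF k2] Fp_even by (simp add: minus_divide_left[symmetric])
      qed
    qed
  qed
qed

end


context pc
begin

lemma exists_p: "L > L0 \<omega> c \<Longrightarrow> \<exists>p. 0 < p \<and> p < alpha0 \<omega> c \<and> LL \<omega> c p = L"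
proof -
  assume L: "L > L0 \<omega> c"
  have "eventually (\<lambda>p. L \<le> LL \<omega> c p) (at_right 0)" using LL_top unfolding filterlim_at_top by blast
  then have "eventually (\<lambda>p. L \<le> LL \<omega> c p \<and> 0 < p \<and> p < alpha0 \<omega> c) (at_right 0)"
    using evF by eventually_elim auto
  then obtain p2 where p2: "L \<le> LL \<omega> c p2" "0 < p2" "p2 < alpha0 \<omega> c"
    using eventually_happens[of _ "at_right (0::real)"] by auto
  have cont: "continuous_on {p2..alpha0 \<omega> c} (LL \<omega> c)"
    by (rule continuous_on_subset[OF LL_cont]) (use p2 in auto)
  have "\<exists>p. p2 \<le> p \<and> p \<le> alpha0 \<omega> c \<and> LL \<omega> c p = L"
    by (rule IVT2'[OF _ p2(1) _ cont]) (use L LL_alpha0 p2 in auto)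
  then obtain p where p: "p2 \<le> p" "p \<le> alpha0 \<omega> c" "LL \<omega> c p = L" by blast
  have "p \<noteq> alpha0 \<omega> c" using p(3) LL_alpha0 L by auto
  then show ?thesis using p p2 by (intro exI[of _ p]) auto
qed

definition pick :: "real \<Rightarrow> real" where
  "pick L = (SOME p. 0 < p \<and> p < alpha0 \<omega> c \<and> LL \<omega> c p = L)"

lemma pick: "L > L0 \<omega> c \<Longrightarrow> 0 < pick L \<and> pick L < alpha0 \<omega> c \<and> LL \<omega> c (pick L) = L"
  unfolding pick_def by (rule someI_ex) (rule exists_p)

lemma pick_lim: "filterlim pick (at_right 0) at_top"
  unfolding filterlim_at
proof
  have evL: "eventually (\<lambda>L. L > L0 \<omega> c) at_top" by (rule eventually_gt_at_top)
  show "eventually (\<lambda>L. pick L \<in> {0<..} \<and> pick L \<noteq> 0) at_top"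
    using evL by eventually_elim (use pick in force)
  show "(pick \<longlongrightarrow> 0) at_top"
  proof (rule order_tendstoI)
    fix a :: real assume "a < 0"
    show "eventually (\<lambda>L. a < pick L) at_top"
      using evL by eventually_elim (use pick \<open>a < 0\<close> in force)
  next
    fix a :: real assume a: "0 < a"
    define \<delta> where "\<delta> = min a (alpha0 \<omega> c)"
    have d: "0 < \<delta>" "\<delta> \<le> a" "\<delta> \<le> alpha0 \<omega> c" unfolding \<delta>_def using a alpha0_pos by auto
    have cont: "continuous_on {\<delta>..alpha0 \<omega> c} (LL \<omega> c)"
      by (rule continuous_on_subset[OF LL_cont]) (use d in auto)
    obtain pm where pm: "\<forall>y\<in>{\<delta>..alpha0 \<omega> c}. LL \<omega> c y \<le> LL \<omega> c pm"
      using continuous_attains_sup[OF compact_Icc _ cont] d by auto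
    have "eventually (\<lambda>L. L > max (LL \<omega> c pm) (L0 \<omega> c)) at_top" by (rule eventually_gt_at_top)
    then show "eventually (\<lambda>L. pick L < a) at_top"
    proof eventually_elim
      case (elim L)
      then have P: "0 < pick L" "pick L < alpha0 \<omega> c" "LL \<omega> c (pick L) = L" using pick[of L] by auto
      show ?case
      proof (rule ccontr)
        assume "\<not> pick L < a"
        then have "pick L \<in> {\<delta>..alpha0 \<omega> c}" using P d by auto
        then have "LL \<omega> c (pick L) \<le> LL \<omega> c pm" using pm by blast
        then have "L \<le> LL \<omega> c pm" using P by simp
        then show False using elim by simp
      qed
    qed
  qed
qed

definition PhiL :: "real \<Rightarrow> real \<Rightarrow> real" where
  "PhiL L = prof (e3 \<omega> c (pick L)) (kf \<omega> c (pick L)) (bf \<omega> c (pick L)) (gf \<omega> c (pick L))"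

lemma main:
  shows "(\<forall>L > L0 \<omega> c.
              single_bump_solution \<omega> c L (PhiL L) \<and>
              (\<exists>\<eta>3 g k \<beta>. \<eta>3 > 0 \<and> g > 0 \<and> 0 < k \<and> k < 1 \<and>
                 (\<forall>x \<in> {-L..L}. (PhiL L x)\<^sup>2 =
                    \<eta>3 * (jacobi_dn (x / (2 * g)) k)\<^sup>2
                       / (1 + \<beta>\<^sup>2 * (jacobi_sn (x / (2 * g)) k)\<^sup>2)))) \<and>
           (\<forall>x. ((\<lambda>L. PhiL L x) \<longlongrightarrow> soliton \<omega> c x) at_top)"
proof (intro conjI allI impI)
  fix L assume L: "L > L0 \<omega> c"
  note P = pick[OF L]
  have p: "0 < pick L" "pick L < alpha0 \<omega> c" using P by auto
  note X = exist_p[OF p]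
  show "single_bump_solution \<omega> c L (PhiL L)" using X(1) P unfolding PhiL_def by simp
  have k2: "(kf \<omega> c (pick L))\<^sup>2 < 1" using X(4,5) by (simp add: abs_square_less_1)
  show "\<exists>\<eta>3 g k \<beta>. \<eta>3 > 0 \<and> g > 0 \<and> 0 < k \<and> k < 1 \<and>
                 (\<forall>x \<in> {-L..L}. (PhiL L x)\<^sup>2 =
                    \<eta>3 * (jacobi_dn (x / (2 * g)) k)\<^sup>2
                       / (1 + \<beta>\<^sup>2 * (jacobi_sn (x / (2 * g)) k)\<^sup>2))"
    using X(2-5) prof_formula[OF k2 X(2)] unfolding PhiL_def by blast
next
  fix x
  show "((\<lambda>L. PhiL L x) \<longlongrightarrow> soliton \<omega> c x) at_top"
    unfolding PhiL_def using filterlim_compose[OF sol_lim pick_lim] by simp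
qed

end

theorem theorem1p1:
  fixes \<omega> c :: real
  assumes "\<omega> > c\<^sup>2 / 4 \<or> (\<omega> = c\<^sup>2 / 4 \<and> c > 0)"
  shows "\<exists>\<Phi>L :: real \<Rightarrow> real \<Rightarrow> real.
           (\<forall>L > L0 \<omega> c.
              single_bump_solution \<omega> c L (\<Phi>L L) \<and>
              (\<exists>\<eta>3 g k \<beta>. \<eta>3 > 0 \<and> g > 0 \<and> 0 < k \<and> k < 1 \<and>
                 (\<forall>x \<in> {-L..L}. (\<Phi>L L x)\<^sup>2 =
                    \<eta>3 * (jacobi_dn (x / (2 * g)) k)\<^sup>2
                       / (1 + \<beta>\<^sup>2 * (jacobi_sn (x / (2 * g)) k)\<^sup>2)))) \<and>
           (\<forall>x. ((\<lambda>L. \<Phi>L L x) \<longlongrightarrow> soliton \<omega> c x) at_top)"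
proof -
  interpret pc \<omega> c using assms by unfold_locales
  show ?thesis using main by blast
qed


end
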